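(* Assume the setting below, and let $\mathcal C=\mathcal C(\bar\rho)<\infty$ be a constant such that $H_L(r\,|\,\pi_L)\le\mathcal C L^2$ for every $L$ and every probability measure $r$ on $\Omega_{\bar\rho^{(L)}}$. Then for every $t>0$, $N\ge1$, $(i,j)\in\mathcal I_N$ and every $L$ multiple of $N$, the measure $p_L:=p_{L,t,(i,j)}$ (viewed as a probability measure on $\Omega_{\bar\rho^{(L)}}$) satisfies $$I_L(p_L)\le\frac{\mathcal C N}{t}.$$
   Context: Lattices: $\mathcal T$ is the triangular lattice on $\mathbb Z^2$ ($u\sim u\pm\hat e_i$, $\hat e_1=(1,0)$, $\hat e_2=(0,1)$, $\hat e_3=(-1,-1)$; $\hat e_3$ vertical), $\mathcal H$ its dual honeycomb lattice; $b_i(u)$ is the edge of $\mathcal H$ crossed by the $\mathcal T$-edge from $u$ to $u+\hat e_i$ (type $i$; type-3 dimers are "particles"); $\mathcal H_L,\mathcal T_L$ are quotients by $L\mathbb Z^2$. $\mathbb T$ is the open triangle with vertices $(0,0),(1,0),(0,1)$. $\Omega_{\bar\rho^{(L)}}$ ($\bar\rho^{(L)}\in\mathbb T$, $L\bar\rho^{(L)}_i\in\mathbb N$) is the set of perfect matchings of $\mathcal H_L$ with $L^2\bar\rho^{(L)}_i$ dimers of type $i=1,2$; $\pi_L$ is the uniform measure on it. Dynamics: a particle at $b_3(v)$ moved by $\pm n\hat e_3$ goes to $b_3(v\pm n\hat e_3)$ (other particles fixed); $I^\pm(p)$ is the largest $m\ge0$ such that moving particle $p$ by $\pm n\hat e_3$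 gives a configuration of $\Omega_{\bar\rho^{(L)}}$ for all $1\le n\le m$; the Markov chain $\eta(t)$ on $\Omega_{\bar\rho^{(L)}}$ moves $p$ by $\pm n\hat e_3$, $1\le n\le I^\pm(p)$, at rate $L^2/(2n)$; $\mathcal L_{\eta\eta'}$ denotes the transition rate from $\eta$ to $\eta'$; $\mathbb E$ the expectation, $\eta(0)=\eta_0\in\Omega_{\bar\rho^{(L)}}$. Standing assumption: $\bar\rho^{(L)}\to\bar\rho\in\mathbb T$; there is a compact convex $\mathcal A\subset\mathbb T$ and a periodic $C^2$ $\psi_0$ on $[0,1]^2$ with $\psi_0(0,0)=0$, $\nabla\psi_0+\bar\rho\in\mathcal A$, $\frac1LH_{\eta_0}(\lfloor uL\rfloor)\to\psi_0(u)$, where $H_\eta(0,0)=0$, $H_\eta(u+\hat e_i)-H_\eta(u)=-\bar\rho^{(L)}_i+\mathbf 1_{b_i(u)\in\eta}$. Relative entropy: $H_L(r|\pi_L)=\sum_\eta r(\eta)\log\frac{r(\eta)}{\pi_L(\eta)}$. Dirichlet form: $I_L(r)=\frac1{2L^2}\sum_{\eta\ne\eta'\in\Omega_{\bar\rho^{(L)}}}\mathcal L_{\eta\eta'}\big(\sqrt{r(\eta)}-\sqrt{r(\eta')}\big)^2$. $\eta_{-u}$ is the translate of $\eta$ by $-u$. For $N\ge1$, $L$ a multiple of $N$: $\mathcal I_N=\{(i,j):1\le i\le N, j=(j_1,j_2),1\le j_a\le N\}$, $B_j=\{u\in\mathcal T_L:u_a\in\{L(j_a-1)/N,\dots,Lj_a/N-1\},a=1,2\}$,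 $I_i=[t(i-1)/N,ti/N)$, and $p_{L,t,(i,j)}(f)=\frac{1}{(L/N)^2}\sum_{u\in B_j}\frac{1}{t/N}\int_{I_i}\mathbb E\,f(\eta_{-u}(s))\,ds$. *)

theory Defs
  imports "HOL-Analysis.Analysis"
begin

type_synonym site = "int \<times> int"
type_synonym dimer = "site \<times> nat"   (* (u,i) stands for the honeycomb edge b_i(u) *)
type_synonym config = "dimer set"

definition ehat :: "nat \<Rightarrow> site" where
  "ehat i = (if i = 1 then (1,0) else if i = 2 then (0,1) else (-1,-1))"

definition addL :: "nat \<Rightarrow> site \<Rightarrow> site \<Rightarrow> site" where
  "addL L u v = ((fst u + fst v) mod int L, (snd u + snd v) mod int L)"

definition sitesL :: "nat \<Rightarrow> site set" where
  "sitesL L = {0..<int L} \<times> {0..<int L}"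

definition dimersL :: "nat \<Rightarrow> dimer set" where
  "dimersL L = sitesL L \<times> {1,2,3}"

(* perfect matching of H_L: every vertex of H_L (= triangle of T_L) is covered by exactly one
   dimer. Triangle {u,u+e1,u+e1+e2} is bounded by the T-edges crossed by b_1(u), b_2(u+e1),
   b_3(u+e1+e2); triangle {u,u+e2,u+e1+e2} by b_2(u), b_1(u+e2), b_3(u+e1+e2). *)
definition perfect_matching :: "nat \<Rightarrow> config \<Rightarrow> bool" where
  "perfect_matching L \<eta> \<longleftrightarrow> \<eta> \<subseteq> dimersL L \<and>
     (\<forall>u\<in>sitesL L.
        card (\<eta> \<inter> {(u,1), (addL L u (1,0), 2), (addL L u (1,1), 3)}) = 1 \<and>
        card (\<eta> \<inter> {(u,2), (addL L u (0,1), 1), (addL L u (1,1), 3)}) = 1)"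

definition Omega :: "nat \<Rightarrow> real \<times> real \<Rightarrow> config set" where
  "Omega L \<rho> = {\<eta>. perfect_matching L \<eta> \<and>
      real (card {u. (u,1) \<in> \<eta>}) = (real L)^2 * fst \<rho> \<and>
      real (card {u. (u,2) \<in> \<eta>}) = (real L)^2 * snd \<rho>}"

definition Tri :: "(real \<times> real) set" where
  "Tri = {(a,b). 0 < a \<and> 0 < b \<and> a + b < 1}"

definition particles :: "config \<Rightarrow> site set" where
  "particles \<eta> = {v. (v,3) \<in> \<eta>}"

definition moved :: "nat \<Rightarrow> config \<Rightarrow> site \<Rightarrow> int \<Rightarrow> nat \<Rightarrow> site set" where
  "moved L \<eta> v s n = insert (addL L v (s * int n * fst (ehat 3), s * int n * snd (ehat 3)))
                              (particles \<eta> - {v})"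

definition valid_move :: "nat \<Rightarrow> real \<times> real \<Rightarrow> config \<Rightarrow> site \<Rightarrow> int \<Rightarrow> nat \<Rightarrow> bool" where
  "valid_move L \<rho> \<eta> v s n \<longleftrightarrow> (\<exists>\<eta>'\<in>Omega L \<rho>. particles \<eta>' = moved L \<eta> v s n)"

definition Imax :: "nat \<Rightarrow> real \<times> real \<Rightarrow> config \<Rightarrow> site \<Rightarrow> int \<Rightarrow> nat" where
  "Imax L \<rho> \<eta> v s = (GREATEST m. \<forall>n\<in>{1..m}. valid_move L \<rho> \<eta> v s n)"

definition rate :: "nat \<Rightarrow> real \<times> real \<Rightarrow> config \<Rightarrow> config \<Rightarrow> real" where
  "rate L \<rho> \<eta> \<eta>' =
     (\<Sum>v\<in>particles \<eta>. \<Sum>s\<in>{1,-1::int}. \<Sum>n\<in>{1..Imax L \<rho> \<eta> v s}.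
        if particles \<eta>' = moved L \<eta> v s n then (real L)^2 / (2 * real n) else 0)"

definition generator :: "nat \<Rightarrow> real \<times> real \<Rightarrow> config \<Rightarrow> config \<Rightarrow> real" where
  "generator L \<rho> \<eta> \<eta>' =
     (if \<eta> = \<eta>' then - (\<Sum>\<zeta>\<in>Omega L \<rho> - {\<eta>}. rate L \<rho> \<eta> \<zeta>) else rate L \<rho> \<eta> \<eta>')"

primrec mpow :: "'a set \<Rightarrow> ('a \<Rightarrow> 'a \<Rightarrow> real) \<Rightarrow> nat \<Rightarrow> 'a \<Rightarrow> 'a \<Rightarrow> real" where
  "mpow S Q 0 = (\<lambda>a b. if a = b then 1 else 0)"
| "mpow S Q (Suc k) = (\<lambda>a b. \<Sum>c\<in>S. mpow S Q k a c * Q c b)"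

definition transprob :: "nat \<Rightarrow> real \<times> real \<Rightarrow> real \<Rightarrow> config \<Rightarrow> config \<Rightarrow> real" where
  "transprob L \<rho> s a b =
     (\<Sum>k. s ^ k / fact k * mpow (Omega L \<rho>) (generator L \<rho>) k a b)"

definition expect :: "nat \<Rightarrow> real \<times> real \<Rightarrow> config \<Rightarrow> real \<Rightarrow> (config \<Rightarrow> real) \<Rightarrow> real" where
  "expect L \<rho> \<eta>0 s f = (\<Sum>\<eta>\<in>Omega L \<rho>. transprob L \<rho> s \<eta>0 \<eta> * f \<eta>)"

definition shift :: "nat \<Rightarrow> site \<Rightarrow> config \<Rightarrow> config" where
  "shift L d \<eta> = (\<lambda>(w,i). (addL L w d, i)) ` \<eta>"

definition Bbox :: "nat \<Rightarrow> nat \<Rightarrow> nat \<times> nat \<Rightarrow> site set" where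
  "Bbox L N j = {(a,b). int (fst j - 1) * int (L div N) \<le> a \<and> a < int (fst j) * int (L div N) \<and>
                        int (snd j - 1) * int (L div N) \<le> b \<and> b < int (snd j) * int (L div N)}"

definition pLt :: "nat \<Rightarrow> real \<times> real \<Rightarrow> config \<Rightarrow> real \<Rightarrow> nat \<Rightarrow> nat \<Rightarrow> nat \<times> nat
                    \<Rightarrow> (config \<Rightarrow> real) \<Rightarrow> real" where
  "pLt L \<rho> \<eta>0 t N i j f =
     1 / (real L / real N)^2 * (\<Sum>u\<in>Bbox L N j.
        1 / (t / real N) * integral {t * (real i - 1) / real N ..< t * real i / real N}
          (\<lambda>s. expect L \<rho> \<eta>0 s (\<lambda>\<eta>. f (shift L (- u) \<eta>))))"

(* p_L viewed as a probability measure on Omega: mass of a configuration \<zeta> *)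
definition pmeas :: "nat \<Rightarrow> real \<times> real \<Rightarrow> config \<Rightarrow> real \<Rightarrow> nat \<Rightarrow> nat \<Rightarrow> nat \<times> nat
                    \<Rightarrow> config \<Rightarrow> real" where
  "pmeas L \<rho> \<eta>0 t N i j \<zeta> = pLt L \<rho> \<eta>0 t N i j (\<lambda>\<eta>. if \<eta> = \<zeta> then 1 else 0)"

definition rel_entropy :: "nat \<Rightarrow> real \<times> real \<Rightarrow> (config \<Rightarrow> real) \<Rightarrow> real" where
  "rel_entropy L \<rho> r = (\<Sum>\<eta>\<in>Omega L \<rho>.
      if r \<eta> = 0 then 0 else r \<eta> * ln (r \<eta> / (1 / real (card (Omega L \<rho>)))))"

definition dirichlet :: "nat \<Rightarrow> real \<times> real \<Rightarrow> (config \<Rightarrow> real) \<Rightarrow> real" where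
  "dirichlet L \<rho> r = 1 / (2 * (real L)^2) *
     (\<Sum>\<eta>\<in>Omega L \<rho>. \<Sum>\<eta>'\<in>Omega L \<rho> - {\<eta>}.
        rate L \<rho> \<eta> \<eta>' * (sqrt (r \<eta>) - sqrt (r \<eta>'))^2)"

definition prob_on :: "config set \<Rightarrow> (config \<Rightarrow> real) \<Rightarrow> bool" where
  "prob_on S r \<longleftrightarrow> (\<forall>\<eta>\<in>S. 0 \<le> r \<eta>) \<and> (\<Sum>\<eta>\<in>S. r \<eta>) = 1"

definition rho_i :: "real \<times> real \<Rightarrow> nat \<Rightarrow> real" where
  "rho_i \<rho> i = (if i = 1 then fst \<rho> else if i = 2 then snd \<rho> else 1 - fst \<rho> - snd \<rho>)"

definition is_height :: "nat \<Rightarrow> real \<times> real \<Rightarrow> config \<Rightarrow> (site \<Rightarrow> real) \<Rightarrow> bool" where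
  "is_height L \<rho> \<eta> H \<longleftrightarrow> H (0,0) = 0 \<and>
     (\<forall>u i. i \<in> {1,2,3} \<longrightarrow>
        H (u + ehat i) - H u = - rho_i \<rho> i + (if (addL L u (0,0), i) \<in> \<eta> then 1 else 0))"

end

theory Submission
  imports Defs
begin


definition mbd :: "'a set \<Rightarrow> ('a \<Rightarrow> 'a \<Rightarrow> real) \<Rightarrow> real" where
  "mbd S Q = (\<Sum>c\<in>S. \<Sum>d\<in>S. \<bar>Q c d\<bar>)"

lemma mbd_nonneg: "0 \<le> mbd S Q"
  unfolding mbd_def by (intro sum_nonneg) auto

lemma mpow_bound:
  assumes "finite S" "b \<in> S"
  shows "\<bar>mpow S Q k a b\<bar> \<le> mbd S Q ^ k"
  using assms(2)
proof (induction k arbitrary: b)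
  case 0 then show ?case by simp
next
  case (Suc k)
  have "\<bar>mpow S Q (Suc k) a b\<bar> \<le> (\<Sum>c\<in>S. \<bar>mpow S Q k a c\<bar> * \<bar>Q c b\<bar>)"
    by (simp add: sum_abs[THEN order_trans] abs_mult)
  also have "\<dots> \<le> (\<Sum>c\<in>S. mbd S Q ^ k * \<bar>Q c b\<bar>)"
    by (intro sum_mono mult_right_mono Suc.IH) auto
  also have "\<dots> = mbd S Q ^ k * (\<Sum>c\<in>S. \<bar>Q c b\<bar>)"
    by (simp add: sum_distrib_left)
  also have "(\<Sum>c\<in>S. \<bar>Q c b\<bar>) \<le> (\<Sum>c\<in>S. \<Sum>d\<in>S. \<bar>Q c d\<bar>)"
    by (intro sum_mono member_le_sum) (use assms Suc.prems in auto)
  hence "mbd S Q ^ k * (\<Sum>c\<in>S. \<bar>Q c b\<bar>) \<le> mbd S Q ^ k * mbd S Q"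
    unfolding mbd_def by (intro mult_left_mono) (auto simp: mbd_nonneg[unfolded mbd_def])
  finally show ?case by (simp add: mult.commute)
qed

lemma summable_mpow:
  assumes "finite S" "b \<in> S"
  shows "summable (\<lambda>k. \<bar>s ^ k / fact k * mpow S Q k a b\<bar>)"
proof (rule summable_comparison_test[OF _ summable_exp[of "mbd S Q * \<bar>s\<bar>"]])
  show "\<exists>N. \<forall>n\<ge>N. norm \<bar>s ^ n / fact n * mpow S Q n a b\<bar> \<le> inverse (fact n) * (mbd S Q * \<bar>s\<bar>) ^ n"
  proof (intro exI allI impI)
    fix n :: nat
    have "\<bar>s ^ n / fact n * mpow S Q n a b\<bar> = \<bar>s\<bar> ^ n / fact n * \<bar>mpow S Q n a b\<bar>"
      by (simp add: abs_mult power_abs)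
    also have "\<dots> \<le> \<bar>s\<bar> ^ n / fact n * mbd S Q ^ n"
      by (intro mult_left_mono mpow_bound assms) auto
    finally show "norm \<bar>s ^ n / fact n * mpow S Q n a b\<bar> \<le> inverse (fact n) * (mbd S Q * \<bar>s\<bar>) ^ n"
      by (simp add: power_mult_distrib field_simps)
  qed
qed

definition PP :: "'a set \<Rightarrow> ('a \<Rightarrow> 'a \<Rightarrow> real) \<Rightarrow> real \<Rightarrow> 'a \<Rightarrow> 'a \<Rightarrow> real" where
  "PP S Q s a b = (\<Sum>k. s ^ k / fact k * mpow S Q k a b)"

lemma PP_deriv:
  assumes "finite S" "b \<in> S"
  shows "((\<lambda>s. PP S Q s a b) has_real_derivative (\<Sum>c\<in>S. PP S Q s a c * Q c b)) (at s)"
proof -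
  define cf where "cf k = mpow S Q k a b / fact k" for k
  have eq: "PP S Q x a b = (\<Sum>n. cf n * x ^ n)" for x
    unfolding PP_def cf_def by (simp add: field_simps)
  have sm: "summable (\<lambda>n. cf n * y ^ n)" for y
    using summable_rabs_cancel[OF summable_mpow[OF assms, of y Q a]]
    by (simp add: cf_def field_simps)
  have d: "((\<lambda>x. \<Sum>n. cf n * x ^ n) has_real_derivative (\<Sum>n. diffs cf n * s ^ n)) (at s)"
    by (rule termdiffs_strong_converges_everywhere[OF sm])
  have "diffs cf n * s ^ n = (\<Sum>c\<in>S. (s ^ n / fact n * mpow S Q n a c) * Q c b)" for n
  proof -
    have "diffs cf n = mpow S Q (Suc n) a b / fact n"
      unfolding diffs_def cf_def by (simp add: divide_simps)
    thus ?thesis by (simp add: sum_distrib_left sum_divide_distrib field_simps)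
  qed
  hence "(\<Sum>n. diffs cf n * s ^ n) = (\<Sum>n. \<Sum>c\<in>S. (s ^ n / fact n * mpow S Q n a c) * Q c b)"
    by simp
  also have "\<dots> = (\<Sum>c\<in>S. \<Sum>n. (s ^ n / fact n * mpow S Q n a c) * Q c b)"
  proof (rule suminf_sum)
    fix c assume "c \<in> S"
    show "summable (\<lambda>n. s ^ n / fact n * mpow S Q n a c * Q c b)"
      by (rule summable_mult2, rule summable_rabs_cancel, rule summable_mpow) (use assms \<open>c \<in> S\<close> in auto)
  qed
  also have "\<dots> = (\<Sum>c\<in>S. PP S Q s a c * Q c b)"
    unfolding PP_def
  proof (rule sum.cong[OF refl])
    fix c assume "c \<in> S"
    show "(\<Sum>n. s ^ n / fact n * mpow S Q n a c * Q c b) = (\<Sum>n. s ^ n / fact n * mpow S Q n a c) * Q c b"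
      by (rule suminf_mult2[symmetric], rule summable_rabs_cancel, rule summable_mpow) (use assms \<open>c \<in> S\<close> in auto)
  qed
  finally show ?thesis using d unfolding eq[abs_def] by simp
qed

lemma mpow_rowsum:
  assumes "finite S" "a \<in> S" "\<And>c. c \<in> S \<Longrightarrow> (\<Sum>b\<in>S. Q c b) = 0"
  shows "(\<Sum>b\<in>S. mpow S Q k a b) = (if k = 0 then 1 else 0)"
proof (cases k)
  case 0 then show ?thesis using assms by (simp add: sum.delta)
next
  case (Suc m)
  have "(\<Sum>b\<in>S. mpow S Q k a b) = (\<Sum>c\<in>S. mpow S Q m a c * (\<Sum>b\<in>S. Q c b))"
    by (simp add: Suc sum_distrib_left) (rule sum.swap)
  also have "\<dots> = 0" using assms by simp
  finally show ?thesis using Suc by simp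
qed

lemma PP_rowsum:
  assumes "finite S" "a \<in> S" "\<And>c. c \<in> S \<Longrightarrow> (\<Sum>b\<in>S. Q c b) = 0"
  shows "(\<Sum>b\<in>S. PP S Q s a b) = 1"
proof -
  have "(\<Sum>b\<in>S. PP S Q s a b) = (\<Sum>k. \<Sum>b\<in>S. s ^ k / fact k * mpow S Q k a b)"
    unfolding PP_def
  proof (rule suminf_sum[symmetric])
    fix b assume "b \<in> S"
    show "summable (\<lambda>n. s ^ n / fact n * mpow S Q n a b)"
      by (rule summable_rabs_cancel, rule summable_mpow) (use assms \<open>b \<in> S\<close> in auto)
  qed
  also have "\<dots> = (\<Sum>k. if k = 0 then 1 else 0)"
  proof (rule arg_cong[where f=suminf], rule ext)
    fix k
    have "(\<Sum>b\<in>S. s ^ k / fact k * mpow S Q k a b) = s ^ k / fact k * (\<Sum>b\<in>S. mpow S Q k a b)"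
      by (simp add: sum_distrib_left)
    thus "(\<Sum>b\<in>S. s ^ k / fact k * mpow S Q k a b) = (if k = 0 then 1 else 0)"
      by (simp add: mpow_rowsum[OF assms])
  qed
  also have "\<dots> = 1"
    by (subst suminf_finite[of "{0}"]) auto
  finally show ?thesis .
qed

lemma mpow_binom:
  assumes "finite S" "b \<in> S"
  shows "mpow S (\<lambda>c d. Q c d + (if c = d then lam else 0)) n a b =
         (\<Sum>k\<le>n. real (n choose k) * lam ^ (n - k) * mpow S Q k a b)"
  using assms(2)
proof (induction n arbitrary: b)
  case 0 then show ?case by simp
next
  case (Suc n)
  define f where "f k = mpow S Q k a b" for k
  define M where "M = (\<lambda>c d. Q c d + (if c = d then lam else 0))"
  have "mpow S M (Suc n) a b = (\<Sum>c\<in>S. mpow S M n a c * Q c b + (if c = b then mpow S M n a c * lam else 0))"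
    unfolding mpow.simps by (intro sum.cong refl) (simp add: M_def distrib_left)
  also have "\<dots> = (\<Sum>c\<in>S. mpow S M n a c * Q c b) + lam * mpow S M n a b"
    using Suc.prems assms(1) by (simp add: sum.distrib sum.delta mult.commute)
  finally have "mpow S (\<lambda>c d. Q c d + (if c = d then lam else 0)) (Suc n) a b =
     (\<Sum>c\<in>S. mpow S (\<lambda>c d. Q c d + (if c = d then lam else 0)) n a c * Q c b) +
      lam * mpow S (\<lambda>c d. Q c d + (if c = d then lam else 0)) n a b"
    unfolding M_def .
  also have "(\<Sum>c\<in>S. mpow S (\<lambda>c d. Q c d + (if c = d then lam else 0)) n a c * Q c b) =
      (\<Sum>c\<in>S. (\<Sum>k\<le>n. real (n choose k) * lam ^ (n - k) * mpow S Q k a c) * Q c b)"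
    by (intro sum.cong refl) (simp add: Suc.IH)
  also have "\<dots> = (\<Sum>k\<le>n. real (n choose k) * lam ^ (n - k) * f (Suc k))"
    by (simp add: f_def sum_distrib_left sum_distrib_right mult.assoc) (rule sum.swap)
  also have "lam * mpow S (\<lambda>c d. Q c d + (if c = d then lam else 0)) n a b =
       (\<Sum>k\<le>n. real (n choose k) * lam ^ (Suc n - k) * f k)"
    using Suc.IH[OF Suc.prems] unfolding f_def
    by (simp add: sum_distrib_left Suc_diff_le mult.commute mult.left_commute)
  also have "(\<Sum>k\<le>n. real (n choose k) * lam ^ (n - k) * f (Suc k)) +
       (\<Sum>k\<le>n. real (n choose k) * lam ^ (Suc n - k) * f k) =
       (\<Sum>k\<le>Suc n. real (Suc n choose k) * lam ^ (Suc n - k) * f k)"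
  proof -
    have A: "(\<Sum>k\<le>Suc n. real (Suc n choose k) * lam ^ (Suc n - k) * f k) =
       lam ^ Suc n * f 0 + (\<Sum>k\<le>n. real (n choose k) * lam ^ (n - k) * f (Suc k))
         + (\<Sum>k\<le>n. real (n choose Suc k) * lam ^ (n - k) * f (Suc k))"
      by (subst sum.atMost_Suc_shift) (simp add: algebra_simps sum.distrib)
    have B: "(\<Sum>k\<le>Suc n. real (n choose k) * lam ^ (Suc n - k) * f k) =
       lam ^ Suc n * f 0 + (\<Sum>k\<le>n. real (n choose Suc k) * lam ^ (n - k) * f (Suc k))"
      by (subst sum.atMost_Suc_shift) simp
    have C: "(\<Sum>k\<le>Suc n. real (n choose k) * lam ^ (Suc n - k) * f k) =
       (\<Sum>k\<le>n. real (n choose k) * lam ^ (Suc n - k) * f k)"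
      by (subst sum.atMost_Suc) simp
    show ?thesis using A B C by linarith
  qed
  finally show ?case unfolding f_def .
qed

lemma mpow_nonneg:
  assumes "finite S" "a \<in> S" "b \<in> S" "\<And>c d. c \<in> S \<Longrightarrow> d \<in> S \<Longrightarrow> 0 \<le> M c d"
  shows "0 \<le> mpow S M n a b"
  using assms(3)
proof (induction n arbitrary: b)
  case 0 then show ?case by simp
next
  case (Suc n) then show ?case
    using assms by (auto intro!: sum_nonneg mult_nonneg_nonneg)
qed

lemma PP_exp:
  assumes "finite S" "b \<in> S"
  shows "PP S Q s a b * exp (lam * s) =
    (\<Sum>k. s ^ k / fact k * mpow S (\<lambda>c d. Q c d + (if c = d then lam else 0)) k a b)"
proof -
  define u where "u k = s ^ k / fact k * mpow S Q k a b" for k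
  define v where "v k = (lam * s) ^ k / fact k" for k :: nat
  have su: "summable (\<lambda>k. norm (u k))"
    using summable_mpow[OF assms] by (simp add: u_def)
  have sv: "summable (\<lambda>k. norm (v k))"
  proof -
    have "norm (v k) = inverse (fact k) * \<bar>lam * s\<bar> ^ k" for k
      by (simp add: v_def power_abs divide_inverse abs_mult)
    thus ?thesis using summable_exp[of "\<bar>lam * s\<bar>"] by simp
  qed
  have ev: "exp (lam * s) = (\<Sum>k. v k)"
    unfolding v_def exp_def by (simp add: field_simps)
  have "PP S Q s a b * exp (lam * s) = (\<Sum>k. \<Sum>i\<le>k. u i * v (k - i))"
    unfolding ev PP_def u_def[symmetric] by (rule Cauchy_product[OF su sv])
  also have "\<dots> = (\<Sum>k. s ^ k / fact k * mpow S (\<lambda>c d. Q c d + (if c = d then lam else 0)) k a b)"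
  proof (rule arg_cong[where f=suminf], rule ext)
    fix k
    have "u i * v (k - i) = s ^ k / fact k * (real (k choose i) * lam ^ (k - i) * mpow S Q i a b)"
      if "i \<le> k" for i
    proof -
      have "s ^ i * s ^ (k - i) = s ^ k" using that by (simp add: power_add[symmetric])
      moreover have "real (k choose i) = fact k / (fact i * fact (k - i))"
        using binomial_fact[OF that] by simp
      ultimately show ?thesis unfolding u_def v_def
        by (simp add: power_mult_distrib field_simps)
    qed
    hence "(\<Sum>i\<le>k. u i * v (k - i)) = s ^ k / fact k * (\<Sum>i\<le>k. real (k choose i) * lam ^ (k - i) * mpow S Q i a b)"
      by (simp add: sum_distrib_left)
    also have "\<dots> = s ^ k / fact k * mpow S (\<lambda>c d. Q c d + (if c = d then lam else 0)) k a b"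
      by (simp add: mpow_binom[OF assms])
    finally show "(\<Sum>i\<le>k. u i * v (k - i)) = \<dots>" .
  qed
  finally show ?thesis .
qed

lemma PP_nonneg:
  assumes "finite S" "a \<in> S" "b \<in> S" "0 \<le> s"
    and "\<And>c d. c \<in> S \<Longrightarrow> d \<in> S \<Longrightarrow> c \<noteq> d \<Longrightarrow> 0 \<le> Q c d"
    and "\<And>c. c \<in> S \<Longrightarrow> 0 \<le> Q c c + lam"
  shows "0 \<le> PP S Q s a b"
proof -
  have "0 \<le> (\<Sum>k. s ^ k / fact k * mpow S (\<lambda>c d. Q c d + (if c = d then lam else 0)) k a b)"
  proof (rule suminf_nonneg)
    show "summable (\<lambda>k. s ^ k / fact k * mpow S (\<lambda>c d. Q c d + (if c = d then lam else 0)) k a b)"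
      by (rule summable_rabs_cancel, rule summable_mpow) (use assms in auto)
    show "0 \<le> s ^ k / fact k * mpow S (\<lambda>c d. Q c d + (if c = d then lam else 0)) k a b" for k
      using assms by (intro mult_nonneg_nonneg divide_nonneg_nonneg mpow_nonneg) auto
  qed
  hence "0 \<le> PP S Q s a b * exp (lam * s)" using PP_exp[OF assms(1,3)] by simp
  thus ?thesis by (simp add: zero_le_mult_iff)
qed



lemma sqrt_ln_ineq1:
  fixes p q :: real
  assumes "0 < q" "q \<le> p"
  shows "(p - q)^2 \<le> (p + q) * (p - q) * (ln p - ln q)"
proof -
  have "ln (q / p) \<le> q / p - 1" using assms by (intro ln_le_minus_one) auto
  hence l: "(p - q) / p \<le> ln p - ln q" using assms by (simp add: ln_div field_simps)
  have e: "(p + q) * (p - q) * ((p - q) / p) = (p - q)^2 + q * (p - q)^2 / p"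
    using assms by (simp add: field_simps power2_eq_square)
  have "(p - q)^2 \<le> (p + q) * (p - q) * ((p - q) / p)"
    unfolding e using assms by simp
  also have "\<dots> \<le> (p + q) * (p - q) * (ln p - ln q)"
    using assms l by (intro mult_left_mono) auto
  finally show ?thesis .
qed

lemma sqrt_ln_ineq:
  fixes x y :: real
  assumes "0 < x" "0 < y"
  shows "2 * (sqrt x - sqrt y)^2 \<le> (x - y) * (ln x - ln y)"
proof -
  define p q where "p = sqrt x" "q = sqrt y"
  have pq: "0 < p" "0 < q" "x = p^2" "y = q^2" using assms by (auto simp: p_q_def)
  have lx: "ln x = 2 * ln p" "ln y = 2 * ln q" using pq by (simp_all add: ln_realpow)
  have e: "(x - y) * (ln x - ln y) = 2 * ((p + q) * (p - q) * (ln p - ln q))"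
  proof -
    have "(x - y) * (ln x - ln y) = (p^2 - q^2) * (2 * ln p - 2 * ln q)" using lx pq by simp
    thus ?thesis by (simp add: power2_eq_square algebra_simps)
  qed
  have "(p - q)^2 \<le> (p + q) * (p - q) * (ln p - ln q)"
  proof (cases "q \<le> p")
    case True then show ?thesis using sqrt_ln_ineq1 pq by auto
  next
    case False
    hence "(q - p)^2 \<le> (q + p) * (q - p) * (ln q - ln p)" using sqrt_ln_ineq1 pq by auto
    thus ?thesis by (simp add: power2_commute algebra_simps)
  qed
  thus ?thesis using e by (simp add: p_q_def)
qed

definition gen :: "'a set \<Rightarrow> ('a \<Rightarrow> 'a \<Rightarrow> real) \<Rightarrow> 'a \<Rightarrow> 'a \<Rightarrow> real" where
  "gen S R c d = (if c = d then - (\<Sum>z\<in>S - {c}. R c z) else R c d)"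

definition DF :: "'a set \<Rightarrow> ('a \<Rightarrow> 'a \<Rightarrow> real) \<Rightarrow> ('a \<Rightarrow> real) \<Rightarrow> real" where
  "DF S R x = (\<Sum>e\<in>S. \<Sum>e'\<in>S - {e}. R e e' * (sqrt (x e) - sqrt (x e'))^2)"

lemma gen_rowsum: "finite S \<Longrightarrow> c \<in> S \<Longrightarrow> (\<Sum>b\<in>S. gen S R c b) = 0"
proof -
  assume a: "finite S" "c \<in> S"
  have "(\<Sum>b\<in>S - {c}. gen S R c b) = (\<Sum>b\<in>S - {c}. R c b)"
    by (intro sum.cong) (auto simp: gen_def)
  thus ?thesis using a by (simp add: sum.remove[of S c] gen_def)
qed

lemma sum_if_ne: "finite S \<Longrightarrow> (\<Sum>b\<in>S. if b \<noteq> c then g b else 0) = (\<Sum>b\<in>S - {c}. g b)"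
proof -
  assume "finite S"
  hence "(\<Sum>b\<in>{b\<in>S. b \<noteq> c}. g b) = (\<Sum>b\<in>S. if b \<noteq> c then g b else 0)" by (rule sum.inter_filter)
  moreover have "{b\<in>S. b \<noteq> c} = S - {c}" by auto
  ultimately show ?thesis by simp
qed

lemma sum_offdiag_swap:
  assumes "finite S"
  shows "(\<Sum>c\<in>S. \<Sum>b\<in>S - {c}. f c b) = (\<Sum>b\<in>S. \<Sum>c\<in>S - {b}. f c b)"
proof -
  have "(\<Sum>c\<in>S. \<Sum>b\<in>S - {c}. f c b) = (\<Sum>c\<in>S. \<Sum>b\<in>S. if b \<noteq> c then f c b else 0)"
    using assms by (simp add: sum_if_ne)
  also have "\<dots> = (\<Sum>b\<in>S. \<Sum>c\<in>S. if b \<noteq> c then f c b else 0)" by (rule sum.swap)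
  also have "\<dots> = (\<Sum>b\<in>S. \<Sum>c\<in>S - {b}. f c b)"
  proof (rule sum.cong[OF refl])
    fix b
    have "(\<Sum>c\<in>S. if b \<noteq> c then f c b else 0) = (\<Sum>c\<in>S. if c \<noteq> b then f c b else 0)"
      by (intro sum.cong) auto
    thus "(\<Sum>c\<in>S. if b \<noteq> c then f c b else 0) = (\<Sum>c\<in>S - {b}. f c b)"
      using assms by (simp add: sum_if_ne)
  qed
  finally show ?thesis .
qed

lemma dissip_pointwise:
  assumes S: "finite S"
    and Rnn: "\<And>c d. c \<in> S \<Longrightarrow> d \<in> S \<Longrightarrow> 0 \<le> R c d"
    and Rsym: "\<And>c d. c \<in> S \<Longrightarrow> d \<in> S \<Longrightarrow> R c d = R d c"
    and pos: "\<And>x. x \<in> S \<Longrightarrow> 0 < r x"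
  shows "(\<Sum>b\<in>S. (\<Sum>c\<in>S. r c * gen S R c b) * (ln (r b) + 1)) \<le> - DF S R r"
proof -
  define l where "l x = ln (r x)" for x
  have "(\<Sum>b\<in>S. (\<Sum>c\<in>S. r c * gen S R c b) * (ln (r b) + 1)) =
        (\<Sum>b\<in>S. \<Sum>c\<in>S. r c * gen S R c b * l b) + (\<Sum>b\<in>S. \<Sum>c\<in>S. r c * gen S R c b)"
    by (simp add: l_def sum_distrib_right distrib_left sum.distrib)
  also have "(\<Sum>b\<in>S. \<Sum>c\<in>S. r c * gen S R c b) = (\<Sum>c\<in>S. r c * (\<Sum>b\<in>S. gen S R c b))"
    by (subst sum.swap) (simp add: sum_distrib_left)
  also have "\<dots> = 0" using gen_rowsum[OF S] by simp
  also have "(\<Sum>b\<in>S. \<Sum>c\<in>S. r c * gen S R c b * l b) = (\<Sum>c\<in>S. r c * (\<Sum>b\<in>S. gen S R c b * l b))"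
    by (subst sum.swap) (simp add: sum_distrib_left mult.assoc)
  also have "\<dots> = (\<Sum>c\<in>S. \<Sum>b\<in>S - {c}. r c * R c b * (l b - l c))"
  proof (rule sum.cong[OF refl])
    fix c assume c: "c \<in> S"
    have "(\<Sum>b\<in>S. gen S R c b * l b) = gen S R c c * l c + (\<Sum>b\<in>S - {c}. gen S R c b * l b)"
      using S c by (simp add: sum.remove)
    also have "(\<Sum>b\<in>S - {c}. gen S R c b * l b) = (\<Sum>b\<in>S - {c}. R c b * l b)"
      by (intro sum.cong) (auto simp: gen_def)
    also have "gen S R c c * l c + (\<Sum>b\<in>S - {c}. R c b * l b) = (\<Sum>b\<in>S - {c}. R c b * (l b - l c))"
      by (simp add: gen_def sum_distrib_right right_diff_distrib sum_subtractf)
    finally show "r c * (\<Sum>b\<in>S. gen S R c b * l b) = (\<Sum>b\<in>S - {c}. r c * R c b * (l b - l c))"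
      by (simp add: sum_distrib_left mult.assoc)
  qed
  finally have X: "(\<Sum>b\<in>S. (\<Sum>c\<in>S. r c * gen S R c b) * (ln (r b) + 1)) =
      (\<Sum>c\<in>S. \<Sum>b\<in>S - {c}. r c * R c b * (l b - l c))" by simp
  define X where "X = (\<Sum>c\<in>S. \<Sum>b\<in>S - {c}. r c * R c b * (l b - l c))"
  have sw: "(\<Sum>c\<in>S. \<Sum>b\<in>S - {c}. R c b * r b * (l c - l b)) = X"
  proof -
    have "(\<Sum>c\<in>S. \<Sum>b\<in>S - {c}. R c b * r b * (l c - l b)) = (\<Sum>b\<in>S. \<Sum>c\<in>S - {b}. R c b * r b * (l c - l b))"
      by (rule sum_offdiag_swap[OF S])
    also have "\<dots> = X" unfolding X_def
      by (intro sum.cong refl) (auto simp: Rsym)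
    finally show ?thesis .
  qed
  have "2 * DF S R r \<le> (\<Sum>c\<in>S. \<Sum>b\<in>S - {c}. R c b * ((r c - r b) * (l c - l b)))"
    unfolding DF_def sum_distrib_left
  proof (intro sum_mono)
    fix c b assume cb: "c \<in> S" "b \<in> S - {c}"
    have "2 * (sqrt (r c) - sqrt (r b))^2 \<le> (r c - r b) * (l c - l b)"
      unfolding l_def using cb by (intro sqrt_ln_ineq pos) auto
    thus "2 * (R c b * (sqrt (r c) - sqrt (r b))^2) \<le> R c b * ((r c - r b) * (l c - l b))"
    proof -
      have "R c b * (2 * (sqrt (r c) - sqrt (r b))^2) \<le> R c b * ((r c - r b) * (l c - l b))"
        using Rnn[of c b] cb \<open>2 * _ \<le> _\<close> by (intro mult_left_mono) auto
      thus ?thesis by (simp add: mult.left_commute)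
    qed
  qed
  also have "\<dots> = (\<Sum>c\<in>S. \<Sum>b\<in>S - {c}. r c * R c b * (l c - l b)) - (\<Sum>c\<in>S. \<Sum>b\<in>S - {c}. R c b * r b * (l c - l b))"
    by (simp add: sum_subtractf[symmetric] algebra_simps)
  also have "(\<Sum>c\<in>S. \<Sum>b\<in>S - {c}. r c * R c b * (l c - l b)) = - X"
    by (simp add: X_def sum_negf[symmetric] algebra_simps)
  finally have "2 * DF S R r \<le> - 2 * X" using sw by simp
  thus ?thesis using X X_def by simp
qed

definition HH :: "'a set \<Rightarrow> ('a \<Rightarrow> real) \<Rightarrow> real" where
  "HH S x = (\<Sum>y\<in>S. x y * ln (x y))"

lemma dissip_integral:
  assumes S: "finite S"
    and Rnn: "\<And>c d. c \<in> S \<Longrightarrow> d \<in> S \<Longrightarrow> 0 \<le> R c d"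
    and Rsym: "\<And>c d. c \<in> S \<Longrightarrow> d \<in> S \<Longrightarrow> R c d = R d c"
    and ab: "a \<le> b"
    and pos: "\<And>s x. s \<in> {a..b} \<Longrightarrow> x \<in> S \<Longrightarrow> 0 < r s x"
    and der: "\<And>s x. s \<in> {a..b} \<Longrightarrow> x \<in> S \<Longrightarrow>
        ((\<lambda>s. r s x) has_real_derivative (\<Sum>c\<in>S. r s c * gen S R c x)) (at s)"
  shows "(\<lambda>s. DF S R (r s)) integrable_on {a..b}"
    and "integral {a..b} (\<lambda>s. DF S R (r s)) \<le> HH S (r a) - HH S (r b)"
proof -
  define Hd where "Hd s = (\<Sum>x\<in>S. (\<Sum>c\<in>S. r s c * gen S R c x) * (ln (r s x) + 1))" for s
  have hd: "((\<lambda>s. HH S (r s)) has_real_derivative Hd s) (at s)" if s: "s \<in> {a..b}" for s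
    unfolding HH_def Hd_def
  proof (rule DERIV_sum)
    fix x assume x: "x \<in> S"
    have "((\<lambda>s. r s x * ln (r s x)) has_real_derivative
       (r s x * (inverse (r s x) * (\<Sum>c\<in>S. r s c * gen S R c x)) + (\<Sum>c\<in>S. r s c * gen S R c x) * ln (r s x))) (at s)"
      by (rule DERIV_mult', rule der[OF s x], rule DERIV_chain2[OF DERIV_ln], rule pos[OF s x], rule der[OF s x])
    moreover have "r s x * (inverse (r s x) * (\<Sum>c\<in>S. r s c * gen S R c x)) + (\<Sum>c\<in>S. r s c * gen S R c x) * ln (r s x)
       = (\<Sum>c\<in>S. r s c * gen S R c x) * (ln (r s x) + 1)"
      using pos[OF s x] by (simp add: field_simps)
    ultimately show "((\<lambda>s. r s x * ln (r s x)) has_real_derivative (\<Sum>c\<in>S. r s c * gen S R c x) * (ln (r s x) + 1)) (at s)"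
      by simp
  qed
  have ftc: "(Hd has_integral (HH S (r b) - HH S (r a))) {a..b}"
    by (rule fundamental_theorem_of_calculus[OF ab])
       (use hd in \<open>auto simp: has_real_derivative_iff_has_vector_derivative[symmetric] intro: has_field_derivative_at_within\<close>)
  have cont: "continuous_on {a..b} (\<lambda>s. r s x)" if "x \<in> S" for x
    by (rule has_real_derivative_imp_continuous_on) (use der that in auto)
  have "continuous_on {a..b} (\<lambda>s. DF S R (r s))"
    unfolding DF_def by (intro continuous_intros cont) auto
  thus int: "(\<lambda>s. DF S R (r s)) integrable_on {a..b}"
    by (rule integrable_continuous_interval)
  have "integral {a..b} (\<lambda>s. DF S R (r s)) \<le> integral {a..b} (\<lambda>s. - Hd s)"
  proof (rule integral_le[OF int])
    show "(\<lambda>s. - Hd s) integrable_on {a..b}" using ftc by (intro integrable_neg) blast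
    show "DF S R (r s) \<le> - Hd s" if "s \<in> {a..b}" for s
    proof -
      have "Hd s \<le> - DF S R (r s)" unfolding Hd_def
        by (rule dissip_pointwise[OF S]) (use Rnn Rsym pos that in auto)
      thus ?thesis by simp
    qed
  qed
  also have "\<dots> = HH S (r a) - HH S (r b)"
    using integral_unique[OF has_integral_neg[OF ftc]] by simp
  finally show "integral {a..b} (\<lambda>s. DF S R (r s)) \<le> HH S (r a) - HH S (r b)" .
qed



lemma addL_in: "0 < L \<Longrightarrow> addL L u v \<in> sitesL L"
  by (auto simp: addL_def sitesL_def)

lemma addL_addL: "addL L (addL L u v) w = addL L u (fst v + fst w, snd v + snd w)"
  by (simp add: addL_def mod_add_left_eq add.assoc)

lemma addL_0: "u \<in> sitesL L \<Longrightarrow> addL L u (0,0) = u"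
  by (auto simp: addL_def sitesL_def)

lemma addL_per: "addL L u (a + int L * j, b + int L * k) = addL L u (a,b)"
  by (simp add: addL_def add.assoc[symmetric])

lemma addL_inj: "u \<in> sitesL L \<Longrightarrow> u' \<in> sitesL L \<Longrightarrow> addL L u d = addL L u' d \<Longrightarrow> u = u'"
proof -
  assume a: "u \<in> sitesL L" "u' \<in> sitesL L" "addL L u d = addL L u' d"
  have 1: "addL L (addL L u d) (- fst d, - snd d) = u" using a(1) by (simp add: addL_addL addL_0)
  have 2: "addL L (addL L u' d) (- fst d, - snd d) = u'" using a(2) by (simp add: addL_addL addL_0)
  show ?thesis using 1 2 a(3) by metis
qed

lemma inj_addL: "inj_on (\<lambda>w. addL L w d) (sitesL L)"
  by (auto intro: inj_onI addL_inj)

lemma finite_sitesL: "finite (sitesL L)" by (simp add: sitesL_def)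
lemma finite_dimersL: "finite (dimersL L)" by (simp add: dimersL_def finite_sitesL)

lemma card_sitesL: "card (sitesL L) = L * L"
  by (simp add: sitesL_def card_cartesian_product)

definition T1 :: "nat \<Rightarrow> site \<Rightarrow> dimer set" where
  "T1 L u = {(u,1), (addL L u (1,0), 2), (addL L u (1,1), 3)}"
definition T2 :: "nat \<Rightarrow> site \<Rightarrow> dimer set" where
  "T2 L u = {(u,2), (addL L u (0,1), 1), (addL L u (1,1), 3)}"

lemma pm_iff: "perfect_matching L \<eta> \<longleftrightarrow> \<eta> \<subseteq> dimersL L \<and>
   (\<forall>u\<in>sitesL L. card (\<eta> \<inter> T1 L u) = 1 \<and> card (\<eta> \<inter> T2 L u) = 1)"
  unfolding perfect_matching_def T1_def T2_def ..

definition sig :: "nat \<Rightarrow> site \<Rightarrow> dimer \<Rightarrow> dimer" where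
  "sig L d = (\<lambda>(w,i). (addL L w d, i))"

lemma shift_sig: "shift L d \<eta> = sig L d ` \<eta>"
  unfolding shift_def sig_def ..

lemma sig_simp[simp]: "sig L d (w,i) = (addL L w d, i)"
  by (simp add: sig_def)

lemma sig_in: "0 < L \<Longrightarrow> x \<in> dimersL L \<Longrightarrow> sig L d x \<in> dimersL L"
  by (cases x) (auto simp: dimersL_def addL_in)

lemma inj_sig: "inj_on (sig L d) (dimersL L)"
  by (rule inj_onI) (auto simp: dimersL_def sig_def dest: addL_inj)

lemma T1_sub: "0 < L \<Longrightarrow> u \<in> sitesL L \<Longrightarrow> T1 L u \<subseteq> dimersL L"
  by (auto simp: T1_def dimersL_def addL_in)
lemma T2_sub: "0 < L \<Longrightarrow> u \<in> sitesL L \<Longrightarrow> T2 L u \<subseteq> dimersL L"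
  by (auto simp: T2_def dimersL_def addL_in)

lemma sig_T1: "u \<in> sitesL L \<Longrightarrow> sig L d ` T1 L (addL L u (- fst d, - snd d)) = T1 L u"
  by (simp add: T1_def addL_addL addL_0)
lemma sig_T2: "u \<in> sitesL L \<Longrightarrow> sig L d ` T2 L (addL L u (- fst d, - snd d)) = T2 L u"
  by (simp add: T2_def addL_addL addL_0)

lemma shift_shift:
  assumes "\<eta> \<subseteq> dimersL L" "fst e + fst d = 0" "snd e + snd d = 0"
  shows "shift L d (shift L e \<eta>) = \<eta>"
proof -
  have "sig L d (sig L e x) = x" if "x \<in> \<eta>" for x
    using that assms by (cases x) (auto simp: addL_addL addL_0 dimersL_def)
  thus ?thesis unfolding shift_sig image_image by simp
qed

lemma shift_sub: "0 < L \<Longrightarrow> \<eta> \<subseteq> dimersL L \<Longrightarrow> shift L d \<eta> \<subseteq> dimersL L"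
  unfolding shift_sig using sig_in by blast

lemma card_shift_Int:
  assumes "0 < L" "\<eta> \<subseteq> dimersL L" "T \<subseteq> dimersL L"
  shows "card (shift L d \<eta> \<inter> sig L d ` T) = card (\<eta> \<inter> T)"
proof -
  have "shift L d \<eta> \<inter> sig L d ` T = sig L d ` (\<eta> \<inter> T)"
    unfolding shift_sig by (rule inj_on_image_Int[OF inj_sig assms(2,3), symmetric])
  moreover have "card (sig L d ` (\<eta> \<inter> T)) = card (\<eta> \<inter> T)"
    by (rule card_image, rule inj_on_subset[OF inj_sig]) (use assms in auto)
  ultimately show ?thesis by simp
qed

lemma sites_type_shift:
  assumes "\<eta> \<subseteq> dimersL L"
  shows "{u. (u,k) \<in> shift L d \<eta>} = (\<lambda>w. addL L w d) ` {w. (w,k) \<in> \<eta>}"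
  unfolding shift_def by (rule set_eqI) (force simp: image_iff)

lemma sites_type_sub: "\<eta> \<subseteq> dimersL L \<Longrightarrow> {w. (w,k) \<in> \<eta>} \<subseteq> sitesL L"
  by (auto simp: dimersL_def)

lemma card_type_shift:
  assumes "\<eta> \<subseteq> dimersL L"
  shows "card {u. (u,k) \<in> shift L d \<eta>} = card {w. (w,k) \<in> \<eta>}"
  unfolding sites_type_shift[OF assms]
  by (rule card_image, rule inj_on_subset[OF inj_addL sites_type_sub[OF assms]])

lemma particles_shift:
  "\<eta> \<subseteq> dimersL L \<Longrightarrow> particles (shift L d \<eta>) = (\<lambda>w. addL L w d) ` particles \<eta>"
  unfolding particles_def by (rule sites_type_shift)

lemma shift_pm:
  assumes L: "0 < L" and pm: "perfect_matching L \<eta>"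
  shows "perfect_matching L (shift L d \<eta>)"
proof -
  have sub: "\<eta> \<subseteq> dimersL L" using pm by (simp add: pm_iff)
  have "card (shift L d \<eta> \<inter> T1 L u) = 1 \<and> card (shift L d \<eta> \<inter> T2 L u) = 1" if u: "u \<in> sitesL L" for u
  proof -
    define u' where "u' = addL L u (- fst d, - snd d)"
    have u': "u' \<in> sitesL L" using L by (simp add: u'_def addL_in)
    have "card (shift L d \<eta> \<inter> T1 L u) = card (\<eta> \<inter> T1 L u')"
      using card_shift_Int[OF L sub T1_sub[OF L u'], where d=d] sig_T1[OF u, where d=d] by (simp add: u'_def)
    moreover have "card (shift L d \<eta> \<inter> T2 L u) = card (\<eta> \<inter> T2 L u')"
      using card_shift_Int[OF L sub T2_sub[OF L u'], where d=d] sig_T2[OF u, where d=d] by (simp add: u'_def)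
    ultimately show ?thesis using pm u' by (simp add: pm_iff)
  qed
  thus ?thesis using shift_sub[OF L sub] by (simp add: pm_iff)
qed

lemma shift_Omega:
  assumes L: "0 < L" and e: "\<eta> \<in> Omega L \<rho>"
  shows "shift L d \<eta> \<in> Omega L \<rho>"
proof -
  have pm: "perfect_matching L \<eta>" using e by (simp add: Omega_def)
  have sub: "\<eta> \<subseteq> dimersL L" using pm by (simp add: pm_iff)
  show ?thesis using e shift_pm[OF L pm] card_type_shift[OF sub]
    by (simp add: Omega_def)
qed

lemma Omega_sub: "\<eta> \<in> Omega L \<rho> \<Longrightarrow> \<eta> \<subseteq> dimersL L"
  by (simp add: Omega_def pm_iff)

lemma finite_Omega: "finite (Omega L \<rho>)"
proof -
  have "Omega L \<rho> \<subseteq> Pow (dimersL L)" using Omega_sub by blast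
  thus ?thesis by (rule finite_subset) (simp add: finite_dimersL)
qed

lemma shift_bij:
  assumes L: "0 < L"
  shows "bij_betw (shift L d) (Omega L \<rho>) (Omega L \<rho>)"
proof (rule bij_betw_byWitness[where f'="shift L (- fst d, - snd d)"])
  show "\<forall>a\<in>Omega L \<rho>. shift L (- fst d, - snd d) (shift L d a) = a"
    using shift_shift[OF Omega_sub] by simp
  show "\<forall>a'\<in>Omega L \<rho>. shift L d (shift L (- fst d, - snd d) a') = a'"
    using shift_shift[OF Omega_sub] by simp
  show "shift L d ` Omega L \<rho> \<subseteq> Omega L \<rho>" using shift_Omega[OF L] by blast
  show "shift L (- fst d, - snd d) ` Omega L \<rho> \<subseteq> Omega L \<rho>" using shift_Omega[OF L] by blast
qed

lemma T1_disj:
  assumes "u \<in> sitesL L" "u' \<in> sitesL L" "u \<noteq> u'"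
  shows "T1 L u \<inter> T1 L u' = {}"
  using assms addL_inj[OF assms(1,2), of "(1,0)"] addL_inj[OF assms(1,2), of "(1,1)"]
  by (auto simp: T1_def)

lemma card_pm:
  assumes L: "0 < L" and pm: "perfect_matching L \<eta>"
  shows "card \<eta> = L * L"
proof -
  have sub: "\<eta> \<subseteq> dimersL L" using pm by (simp add: pm_iff)
  have cover: "\<eta> = (\<Union>u\<in>sitesL L. \<eta> \<inter> T1 L u)"
  proof (rule set_eqI, rule iffI)
    fix x assume x: "x \<in> \<eta>"
    obtain w i where xw: "x = (w,i)" by (cases x)
    have w: "w \<in> sitesL L" and i: "i \<in> {1,2,3}" using sub x xw by (auto simp: dimersL_def)
    have "\<exists>u\<in>sitesL L. (w,i) \<in> T1 L u"
    proof -
      consider "i = 1" | "i = 2" | "i = 3" using i by auto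
      thus ?thesis
      proof cases
        case 1 thus ?thesis using w by (auto simp: T1_def)
      next
        case 2
        have "addL L (addL L w (-1,0)) (1,0) = w" using w by (simp add: addL_addL addL_0)
        thus ?thesis using 2 L by (intro bexI[of _ "addL L w (-1,0)"]) (auto simp: T1_def addL_in)
      next
        case 3
        have "addL L (addL L w (-1,-1)) (1,1) = w" using w by (simp add: addL_addL addL_0)
        thus ?thesis using 3 L by (intro bexI[of _ "addL L w (-1,-1)"]) (auto simp: T1_def addL_in)
      qed
    qed
    thus "x \<in> (\<Union>u\<in>sitesL L. \<eta> \<inter> T1 L u)" using x xw by auto
  qed auto
  have "card \<eta> = (\<Sum>u\<in>sitesL L. card (\<eta> \<inter> T1 L u))"
  proof (subst cover, rule card_UN_disjoint)
    show "finite (sitesL L)" by (rule finite_sitesL)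
    show "\<forall>u\<in>sitesL L. finite (\<eta> \<inter> T1 L u)" by (simp add: T1_def)
    show "\<forall>u\<in>sitesL L. \<forall>u'\<in>sitesL L. u \<noteq> u' \<longrightarrow> (\<eta> \<inter> T1 L u) \<inter> (\<eta> \<inter> T1 L u') = {}"
      using T1_disj by blast
  qed
  also have "\<dots> = (\<Sum>u\<in>sitesL L. 1)" using pm by (simp add: pm_iff)
  also have "\<dots> = L * L" by (simp add: card_sitesL)
  finally show ?thesis .
qed

lemma card_types:
  assumes sub: "\<eta> \<subseteq> dimersL L"
  shows "card \<eta> = card {u. (u,1) \<in> \<eta>} + card {u. (u,2) \<in> \<eta>} + card (particles \<eta>)"
proof -
  have fin: "finite {u. (u,k) \<in> \<eta>}" for k
    by (rule finite_subset[OF sites_type_sub[OF sub] finite_sitesL])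
  define A where "A k = (\<lambda>u. (u,k)) ` {u. (u,k::nat) \<in> \<eta>}" for k
  have cA: "card (A k) = card {u. (u,k) \<in> \<eta>}" for k
    unfolding A_def by (rule card_image) (auto intro: inj_onI)
  have fA: "finite (A k)" for k unfolding A_def using fin by simp
  have eq: "\<eta> = A 1 \<union> A 2 \<union> A 3"
  proof (rule set_eqI, rule iffI)
    fix x assume x: "x \<in> \<eta>"
    obtain w i where xw: "x = (w,i)" by (cases x)
    have "i = 1 \<or> i = 2 \<or> i = 3" using sub x xw by (auto simp: dimersL_def)
    moreover have "x \<in> A i" using x xw unfolding A_def by blast
    ultimately show "x \<in> A 1 \<union> A 2 \<union> A 3" by blast
  qed (auto simp: A_def)
  have "card \<eta> = card (A 1 \<union> A 2) + card (A 3)"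
  proof (subst eq, rule card_Un_disjoint)
    show "finite (A 1 \<union> A 2)" using fA by blast
    show "finite (A 3)" by (rule fA)
    show "(A 1 \<union> A 2) \<inter> A 3 = {}" unfolding A_def by auto
  qed
  also have "card (A 1 \<union> A 2) = card (A 1) + card (A 2)"
    by (rule card_Un_disjoint[OF fA fA]) (unfold A_def, auto)
  finally show ?thesis by (simp add: cA particles_def)
qed

lemma card_particles:
  assumes L: "0 < L" and e: "\<eta> \<in> Omega L \<rho>"
  shows "real (card (particles \<eta>)) = (real L)^2 * (1 - fst \<rho> - snd \<rho>)"
proof -
  have pm: "perfect_matching L \<eta>" using e by (simp add: Omega_def)
  have "real (L * L) = real (card {u. (u,1) \<in> \<eta>}) + real (card {u. (u,2) \<in> \<eta>}) + real (card (particles \<eta>))"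
    using card_types[OF Omega_sub[OF e]] card_pm[OF L pm] by simp
  moreover have "real (card {u. (u,1) \<in> \<eta>}) = (real L)^2 * fst \<rho>"
    "real (card {u. (u,2) \<in> \<eta>}) = (real L)^2 * snd \<rho>" using e by (simp_all add: Omega_def)
  moreover have "real (L * L) = (real L)^2" by (simp add: power2_eq_square)
  ultimately have "real (card (particles \<eta>)) = (real L)^2 - (real L)^2 * fst \<rho> - (real L)^2 * snd \<rho>"
    by linarith
  thus ?thesis by (simp add: right_diff_distrib)
qed

lemma particles_sub: "\<eta> \<subseteq> dimersL L \<Longrightarrow> particles \<eta> \<subseteq> sitesL L"
  unfolding particles_def by (rule sites_type_sub)

lemma finite_particles: "\<eta> \<subseteq> dimersL L \<Longrightarrow> finite (particles \<eta>)"
  by (rule finite_subset[OF particles_sub finite_sitesL])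

definition mv :: "nat \<Rightarrow> config \<Rightarrow> site \<Rightarrow> int \<Rightarrow> site set" where
  "mv L \<eta> v z = insert (addL L v (- z, - z)) (particles \<eta> - {v})"

lemma moved_mv: "moved L \<eta> v s n = mv L \<eta> v (s * int n)"
  by (simp add: moved_def mv_def ehat_def)

definition vm :: "nat \<Rightarrow> real \<times> real \<Rightarrow> config \<Rightarrow> site \<Rightarrow> int \<Rightarrow> bool" where
  "vm L \<rho> \<eta> v z \<longleftrightarrow> (\<exists>\<eta>'\<in>Omega L \<rho>. particles \<eta>' = mv L \<eta> v z)"

lemma valid_vm: "valid_move L \<rho> \<eta> v s n = vm L \<rho> \<eta> v (s * int n)"
  by (simp add: valid_move_def vm_def moved_mv)

lemma Imax_vm: "Imax L \<rho> \<eta> v s = (GREATEST m. \<forall>k\<in>{1..m}. vm L \<rho> \<eta> v (s * int k))"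
  by (simp add: Imax_def valid_vm)

lemma mv_0: "v \<in> particles \<eta> \<Longrightarrow> \<eta> \<subseteq> dimersL L \<Longrightarrow> mv L \<eta> v 0 = particles \<eta>"
  using particles_sub[of \<eta> L] by (auto simp: mv_def addL_0)

lemma mv_per: "mv L \<eta> v (z + int L * j) = mv L \<eta> v z"
proof -
  have "addL L v (- (z + int L * j), - (z + int L * j)) = addL L v (- z + int L * (-j), - z + int L * (-j))"
    by simp
  also have "\<dots> = addL L v (- z, - z)" by (rule addL_per)
  finally show ?thesis by (simp add: mv_def)
qed

lemma mv_back:
  assumes L: "0 < L" and e: "\<eta> \<in> Omega L \<rho>" and e': "\<eta>' \<in> Omega L \<rho>"
    and v: "v \<in> particles \<eta>" and P': "particles \<eta>' = mv L \<eta> v z"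
  shows "mv L \<eta>' (addL L v (- z, - z)) w = mv L \<eta> v (z + w)"
proof -
  define v' where "v' = addL L v (- z, - z)"
  have fin: "finite (particles \<eta>)" by (rule finite_particles[OF Omega_sub[OF e]])
  have "real (card (particles \<eta>')) = real (card (particles \<eta>))"
    using card_particles[OF L e] card_particles[OF L e'] by simp
  hence c: "card (particles \<eta>') = card (particles \<eta>)" by simp
  have nv: "v' \<notin> particles \<eta> - {v}"
  proof
    assume "v' \<in> particles \<eta> - {v}"
    hence "particles \<eta>' = particles \<eta> - {v}" using P' by (auto simp: mv_def v'_def)
    hence "card (particles \<eta>') = card (particles \<eta>) - 1" using fin v by simp
    moreover have "card (particles \<eta>) \<ge> 1" using fin v by (metis One_nat_def Suc_leI card_gt_0_iff empty_iff)
    ultimately show False using c by simp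
  qed
  have "particles \<eta>' - {v'} = particles \<eta> - {v}" using P' nv by (auto simp: mv_def v'_def)
  moreover have "addL L v' (- w, - w) = addL L v (- (z + w), - (z + w))"
    by (simp add: v'_def addL_addL)
  ultimately show ?thesis by (simp add: mv_def v'_def)
qed

lemma greatest_all:
  fixes Q :: "nat \<Rightarrow> bool"
  assumes "n \<le> (GREATEST m. \<forall>k\<in>{1..m}. Q k)"
  shows "\<forall>k\<in>{1..n}. Q k"
proof (cases "\<exists>b. \<forall>m. (\<forall>k\<in>{1..m}. Q k) \<longrightarrow> m \<le> b")
  case True
  then obtain b where b: "\<forall>m. (\<forall>k\<in>{1..m}. Q k) \<longrightarrow> m \<le> b" by blast
  have "\<forall>k\<in>{1..(GREATEST m. \<forall>k\<in>{1..m}. Q k)}. Q k"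
  proof (rule GreatestI_nat[where k=0 and b=b])
    show "\<forall>k\<in>{1..0}. Q k" by simp
    fix y assume "\<forall>k\<in>{1..y}. Q k" thus "y \<le> b" using b by blast
  qed
  note G = this
  show ?thesis
  proof
    fix k assume "k \<in> {1..n}"
    hence "k \<in> {1..(GREATEST m. \<forall>k\<in>{1..m}. Q k)}" using assms by simp
    thus "Q k" using G by blast
  qed
next
  case False
  show ?thesis
  proof
    fix k assume k: "k \<in> {1..n}"
    have "\<not> (\<forall>m. (\<forall>k\<in>{1..m}. Q k) \<longrightarrow> m \<le> k)" using spec[OF False[unfolded not_ex], of k] .
    then obtain m where m: "\<forall>k\<in>{1..m}. Q k" "\<not> m \<le> k" by blast
    have "k \<in> {1..m}" using k m(2) by simp
    thus "Q k" using m(1) by blast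
  qed
qed

lemma greatest_unb:
  fixes Q :: "nat \<Rightarrow> bool"
  assumes "\<not> (\<exists>b. \<forall>m. (\<forall>k\<in>{1..m}. Q k) \<longrightarrow> m \<le> b)"
  shows "\<forall>k\<ge>1. Q k"
proof (intro allI impI)
  fix k :: nat assume "1 \<le> k"
  have "\<not> (\<forall>m. (\<forall>k\<in>{1..m}. Q k) \<longrightarrow> m \<le> k)" using spec[OF assms[unfolded not_ex], of k] .
  then obtain m where m: "\<forall>k\<in>{1..m}. Q k" "\<not> m \<le> k" by blast
  have "k \<in> {1..m}" using \<open>1 \<le> k\<close> m(2) by simp
  thus "Q k" using m(1) by blast
qed

lemma rev_move:
  assumes L: "0 < L" and e: "\<eta> \<in> Omega L \<rho>" and e': "\<eta>' \<in> Omega L \<rho>"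
    and v: "v \<in> particles \<eta>" and s: "s \<in> {1, -1}" and n: "1 \<le> n"
    and nI: "n \<le> Imax L \<rho> \<eta> v s" and P': "particles \<eta>' = moved L \<eta> v s n"
  shows "addL L v (- (s * int n), - (s * int n)) \<in> particles \<eta>'"
    and "particles \<eta> = moved L \<eta>' (addL L v (- (s * int n), - (s * int n))) (- s) n"
    and "n \<le> Imax L \<rho> \<eta>' (addL L v (- (s * int n), - (s * int n))) (- s)"
proof -
  define v' where "v' = addL L v (- (s * int n), - (s * int n))"
  have Pm: "particles \<eta>' = mv L \<eta> v (s * int n)" using P' by (simp add: moved_mv)
  have bk: "mv L \<eta>' v' w = mv L \<eta> v (s * int n + w)" for w
    unfolding v'_def by (rule mv_back[OF L e e' v Pm])
  show "v' \<in> particles \<eta>'" unfolding Pm mv_def v'_def by simp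
  show "particles \<eta> = moved L \<eta>' v' (- s) n"
    by (simp add: moved_mv bk mv_0[OF v Omega_sub[OF e]])
  define Q where "Q k = vm L \<rho> \<eta> v (s * int k)" for k :: nat
  define Q' where "Q' k = vm L \<rho> \<eta>' v' (- s * int k)" for k :: nat
  have IQ: "Imax L \<rho> \<eta> v s = (GREATEST m. \<forall>k\<in>{1..m}. Q k)" by (simp add: Imax_vm Q_def)
  have IQ': "Imax L \<rho> \<eta>' v' (- s) = (GREATEST m. \<forall>k\<in>{1..m}. Q' k)" by (simp add: Imax_vm Q'_def)
  have allQ: "\<forall>k\<in>{1..n}. Q k" using greatest_all nI IQ by metis
  have Q'Q: "Q' k = vm L \<rho> \<eta> v (s * int n - s * int k)" for k
    by (simp add: Q'_def vm_def bk)
  have allQ': "\<forall>k\<in>{1..n}. Q' k"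
  proof
    fix k assume k: "k \<in> {1..n}"
    show "Q' k"
    proof (cases "k = n")
      case True
      have "mv L \<eta> v 0 = particles \<eta>" by (rule mv_0[OF v Omega_sub[OF e]])
      thus ?thesis using True e by (auto simp: Q'Q vm_def)
    next
      case False
      hence "n - k \<in> {1..n}" using k by auto
      hence "Q (n - k)" using allQ by blast
      moreover have "s * int n - s * int k = s * int (n - k)" using k by (simp add: of_nat_diff right_diff_distrib)
      ultimately show ?thesis by (simp add: Q'Q Q_def)
    qed
  qed
  show "n \<le> Imax L \<rho> \<eta>' v' (- s)"
  proof (cases "\<exists>b. \<forall>m. (\<forall>k\<in>{1..m}. Q' k) \<longrightarrow> m \<le> b")
    case True
    then obtain b where "\<forall>m. (\<forall>k\<in>{1..m}. Q' k) \<longrightarrow> m \<le> b" by blast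
    thus ?thesis unfolding IQ' by (intro Greatest_le_nat[where b=b]) (use allQ' in auto)
  next
    case False
    have A': "\<forall>k\<ge>1. Q' k" by (rule greatest_unb[OF False])
    have A: "\<forall>k\<ge>1. Q k"
    proof (intro allI impI)
      fix k :: nat assume k: "1 \<le> k"
      define m where "m = n + k * (L - 1)"
      have "Q' m" using A' n by (simp add: m_def)
      hence "vm L \<rho> \<eta> v (s * int n - s * int m)" by (simp add: Q'Q)
      moreover have "s * int n - s * int m = s * int k + int L * (- (s * int k))"
      proof -
        have "k \<le> L * k" using L by simp
        hence "int (L * k - k) = int L * int k - int k" by (simp add: of_nat_diff)
        hence "int m = int n + int k * int L - int k"
          by (simp add: m_def right_diff_distrib' algebra_simps)
        hence "s * (int k + int m) = s * (int n + int L * int k)" by simp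
        thus ?thesis by (simp add: algebra_simps)
      qed
      ultimately have "vm L \<rho> \<eta> v (s * int k + int L * (- (s * int k)))" by simp
      thus "Q k" unfolding Q_def vm_def mv_per .
    qed

    have "(\<lambda>m. \<forall>k\<in>{1..m}. Q' k) = (\<lambda>m. \<forall>k\<in>{1..m}. Q k)" using A A' by auto
    hence "Imax L \<rho> \<eta>' v' (- s) = Imax L \<rho> \<eta> v s" unfolding IQ IQ' by simp
    thus ?thesis using nI by simp
  qed
qed

definition Tset :: "nat \<Rightarrow> real \<times> real \<Rightarrow> config \<Rightarrow> config \<Rightarrow> (site \<times> int \<times> nat) set" where
  "Tset L \<rho> \<eta> \<eta>' = {(v,s,n). v \<in> particles \<eta> \<and> s \<in> {1,-1} \<and> n \<in> {1..Imax L \<rho> \<eta> v s} \<and>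
      particles \<eta>' = moved L \<eta> v s n}"

lemma rate_Tset:
  assumes sub: "\<eta> \<subseteq> dimersL L"
  shows "rate L \<rho> \<eta> \<eta>' = (\<Sum>x\<in>Tset L \<rho> \<eta> \<eta>'. (real L)^2 / (2 * real (snd (snd x))))"
proof -
  define F where "F x = (if particles \<eta>' = moved L \<eta> (fst x) (fst (snd x)) (snd (snd x))
     then (real L)^2 / (2 * real (snd (snd x))) else 0)" for x :: "site \<times> int \<times> nat"
  define A where "A = Sigma (particles \<eta>) (\<lambda>v. Sigma {1,-1::int} (\<lambda>s. {1..Imax L \<rho> \<eta> v s}))"
  have finA: "finite A" unfolding A_def using finite_particles[OF sub] by auto
  have "rate L \<rho> \<eta> \<eta>' = (\<Sum>v\<in>particles \<eta>. \<Sum>y\<in>Sigma {1,-1::int} (\<lambda>s. {1..Imax L \<rho> \<eta> v s}).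
     if particles \<eta>' = moved L \<eta> v (fst y) (snd y) then (real L)^2 / (2 * real (snd y)) else 0)"
    unfolding rate_def
  proof (intro sum.cong refl)
    fix v
    show "(\<Sum>s\<in>{1, - 1}. \<Sum>n = 1..Imax L \<rho> \<eta> v s. if particles \<eta>' = moved L \<eta> v s n then (real L)\<^sup>2 / (2 * real n) else 0) =
          (\<Sum>y\<in>Sigma {1,-1::int} (\<lambda>s. {1..Imax L \<rho> \<eta> v s}).
            if particles \<eta>' = moved L \<eta> v (fst y) (snd y) then (real L)^2 / (2 * real (snd y)) else 0)"
      by (subst sum.Sigma) (simp_all add: split_def)
  qed
  also have "\<dots> = (\<Sum>x\<in>A. F x)"
    unfolding A_def F_def by (subst sum.Sigma) (simp_all add: finite_particles[OF sub] split_def)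
  also have "\<dots> = (\<Sum>x\<in>{x\<in>A. particles \<eta>' = moved L \<eta> (fst x) (fst (snd x)) (snd (snd x))}. (real L)^2 / (2 * real (snd (snd x))))"
    unfolding F_def by (rule sum.inter_filter[OF finA, symmetric])
  also have "{x\<in>A. particles \<eta>' = moved L \<eta> (fst x) (fst (snd x)) (snd (snd x))} = Tset L \<rho> \<eta> \<eta>'"
  proof (rule set_eqI)
    fix x :: "site \<times> int \<times> nat"
    obtain v s n where xv: "x = (v,s,n)" by (cases x)
    show "x \<in> {x\<in>A. particles \<eta>' = moved L \<eta> (fst x) (fst (snd x)) (snd (snd x))} \<longleftrightarrow> x \<in> Tset L \<rho> \<eta> \<eta>'"
      unfolding xv A_def Tset_def mem_Collect_eq mem_Sigma_iff prod.case fst_conv snd_conv conj_assoc by (rule refl)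
  qed
  finally show ?thesis .
qed

lemma rate_sym:
  assumes L: "0 < L" and e: "\<eta> \<in> Omega L \<rho>" and e': "\<eta>' \<in> Omega L \<rho>"
  shows "rate L \<rho> \<eta> \<eta>' = rate L \<rho> \<eta>' \<eta>"
proof -
  define g where "g x = (addL L (fst x) (- (fst (snd x) * int (snd (snd x))), - (fst (snd x) * int (snd (snd x)))),
      - fst (snd x), snd (snd x))" for x :: "site \<times> int \<times> nat"
  have mem: "g x \<in> Tset L \<rho> b a" if ab: "a \<in> Omega L \<rho>" "b \<in> Omega L \<rho>" and x: "x \<in> Tset L \<rho> a b" for a b x
  proof -
    obtain v s n where xv: "x = (v,s,n)" by (cases x)
    have h: "v \<in> particles a" "s \<in> {1,-1}" "1 \<le> n" "n \<le> Imax L \<rho> a v s" "particles b = moved L a v s n"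
      using x xv by (auto simp: Tset_def)
    note r = rev_move[OF L ab h]
    show ?thesis using r h(2,3) by (auto simp: Tset_def g_def xv)
  qed
  have inv: "g (g x) = x" if ab: "a \<in> Omega L \<rho>" and x: "x \<in> Tset L \<rho> a b" for a b x
  proof -
    obtain v s n where xv: "x = (v,s,n)" by (cases x)
    have "v \<in> sitesL L" using x xv particles_sub[OF Omega_sub[OF ab]] by (auto simp: Tset_def)
    thus ?thesis by (simp add: g_def xv addL_addL addL_0)
  qed
  show ?thesis
    unfolding rate_Tset[OF Omega_sub[OF e]] rate_Tset[OF Omega_sub[OF e']]
  proof (rule sum.reindex_bij_witness[where i=g and j=g])
    fix a assume "a \<in> Tset L \<rho> \<eta> \<eta>'"
    thus "g (g a) = a" "g a \<in> Tset L \<rho> \<eta>' \<eta>" using inv[OF e] mem[OF e e'] by auto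
    show "(real L)^2 / (2 * real (snd (snd (g a)))) = (real L)^2 / (2 * real (snd (snd a)))"
      by (simp add: g_def)
  next
    fix b assume "b \<in> Tset L \<rho> \<eta>' \<eta>"
    thus "g (g b) = b" "g b \<in> Tset L \<rho> \<eta> \<eta>'" using inv[OF e'] mem[OF e' e] by auto
  qed
qed

lemma mv_sub: "0 < L \<Longrightarrow> \<eta> \<subseteq> dimersL L \<Longrightarrow> mv L \<eta> v z \<subseteq> sitesL L"
  using particles_sub[of \<eta> L] by (auto simp: mv_def addL_in)

lemma mv_shift:
  assumes L: "0 < L" and sub: "\<eta> \<subseteq> dimersL L" and v: "v \<in> particles \<eta>"
  shows "mv L (shift L d \<eta>) (addL L v d) z = (\<lambda>w. addL L w d) ` mv L \<eta> v z"
proof -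
  have P: "particles \<eta> \<subseteq> sitesL L" by (rule particles_sub[OF sub])
  have "(\<lambda>w. addL L w d) ` (particles \<eta> - {v}) = (\<lambda>w. addL L w d) ` particles \<eta> - {addL L v d}"
    using inj_on_image_set_diff[OF inj_addL[of L d], of "particles \<eta>" "{v}"] P v by auto
  moreover have "addL L (addL L v (- z, - z)) d = addL L (addL L v d) (- z, - z)"
    by (simp add: addL_addL add.commute)
  ultimately show ?thesis
    by (simp add: mv_def particles_shift[OF sub])
qed

lemma vm_shift1:
  assumes L: "0 < L" and e: "\<eta> \<in> Omega L \<rho>" and v: "v \<in> particles \<eta>" and h: "vm L \<rho> \<eta> v z"
  shows "vm L \<rho> (shift L d \<eta>) (addL L v d) z"
proof -
  obtain \<eta>' where e': "\<eta>' \<in> Omega L \<rho>" and p: "particles \<eta>' = mv L \<eta> v z" using h by (auto simp: vm_def)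
  have "particles (shift L d \<eta>') = mv L (shift L d \<eta>) (addL L v d) z"
    by (simp add: particles_shift[OF Omega_sub[OF e']] mv_shift[OF L Omega_sub[OF e] v] p)
  thus ?thesis using shift_Omega[OF L e', of d] unfolding vm_def by blast
qed

lemma vm_shift:
  assumes L: "0 < L" and e: "\<eta> \<in> Omega L \<rho>" and v: "v \<in> particles \<eta>"
  shows "vm L \<rho> (shift L d \<eta>) (addL L v d) z = vm L \<rho> \<eta> v z"
proof
  assume h: "vm L \<rho> (shift L d \<eta>) (addL L v d) z"
  have v': "addL L v d \<in> particles (shift L d \<eta>)" using v by (simp add: particles_shift[OF Omega_sub[OF e]])
  have "vm L \<rho> (shift L (- fst d, - snd d) (shift L d \<eta>)) (addL L (addL L v d) (- fst d, - snd d)) z"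
    by (rule vm_shift1[OF L shift_Omega[OF L e] v' h])
  moreover have "shift L (- fst d, - snd d) (shift L d \<eta>) = \<eta>" by (rule shift_shift[OF Omega_sub[OF e]]) auto
  moreover have "addL L (addL L v d) (- fst d, - snd d) = v"
    using v particles_sub[OF Omega_sub[OF e]] by (auto simp: addL_addL addL_0)
  ultimately show "vm L \<rho> \<eta> v z" by simp
qed (rule vm_shift1[OF L e v])

lemma Imax_shift:
  assumes L: "0 < L" and e: "\<eta> \<in> Omega L \<rho>" and v: "v \<in> particles \<eta>"
  shows "Imax L \<rho> (shift L d \<eta>) (addL L v d) s = Imax L \<rho> \<eta> v s"
  by (simp add: Imax_vm vm_shift[OF assms])

lemma rate_shift:
  assumes L: "0 < L" and e: "\<eta> \<in> Omega L \<rho>" and e': "\<eta>' \<in> Omega L \<rho>"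
  shows "rate L \<rho> (shift L d \<eta>) (shift L d \<eta>') = rate L \<rho> \<eta> \<eta>'"
proof -
  have sub: "\<eta> \<subseteq> dimersL L" and sub': "\<eta>' \<subseteq> dimersL L" using Omega_sub[OF e] Omega_sub[OF e'] .
  have P: "particles \<eta> \<subseteq> sitesL L" "particles \<eta>' \<subseteq> sitesL L" using particles_sub[OF sub] particles_sub[OF sub'] .
  define j where "j x = (addL L (fst x) d, snd x)" for x :: "site \<times> int \<times> nat"
  define i where "i x = (addL L (fst x) (- fst d, - snd d), snd x)" for x :: "site \<times> int \<times> nat"
  have cond: "(particles (shift L d \<eta>') = moved L (shift L d \<eta>) (addL L v d) s n) = (particles \<eta>' = moved L \<eta> v s n)"
    if v: "v \<in> particles \<eta>" for v s n
  proof -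
    have "(particles (shift L d \<eta>') = moved L (shift L d \<eta>) (addL L v d) s n) =
       ((\<lambda>w. addL L w d) ` particles \<eta>' = (\<lambda>w. addL L w d) ` mv L \<eta> v (s * int n))"
      by (simp add: moved_mv mv_shift[OF L sub v] particles_shift[OF sub'])
    also have "\<dots> = (particles \<eta>' = mv L \<eta> v (s * int n))"
      by (rule inj_on_image_eq_iff[OF inj_addL P(2) mv_sub[OF L sub]])
    finally show ?thesis by (simp add: moved_mv)
  qed
  have back1: "addL L (addL L v d) (- fst d, - snd d) = v" if "v \<in> sitesL L" for v
    using that by (simp add: addL_addL addL_0)
  have ps: "particles (shift L d \<eta>) = (\<lambda>w. addL L w d) ` particles \<eta>" by (rule particles_shift[OF sub])
  show ?thesis
    unfolding rate_Tset[OF Omega_sub[OF e]] rate_Tset[OF Omega_sub[OF shift_Omega[OF L e]]]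
  proof (rule sum.reindex_bij_witness[where i=j and j=i])
    fix a assume a: "a \<in> Tset L \<rho> \<eta> \<eta>'"
    obtain v s n where av: "a = (v,s,n)" by (cases a)
    have a': "v \<in> particles \<eta>" "s \<in> {1,-1}" "n \<in> {1..Imax L \<rho> \<eta> v s}" "particles \<eta>' = moved L \<eta> v s n"
      using a unfolding av Tset_def mem_Collect_eq prod.case by blast+
    note v = a'(1)
    have vS: "v \<in> sitesL L" using v P(1) by blast
    show "i (j a) = a" by (simp add: i_def j_def av back1[OF vS])
    have "addL L v d \<in> particles (shift L d \<eta>)" using v ps by blast
    thus "j a \<in> Tset L \<rho> (shift L d \<eta>) (shift L d \<eta>')"
      using a' unfolding j_def av Tset_def mem_Collect_eq prod.case fst_conv snd_conv Imax_shift[OF L e v] cond[OF v] by blast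
  next
    fix b assume b: "b \<in> Tset L \<rho> (shift L d \<eta>) (shift L d \<eta>')"
    obtain w s n where bw: "b = (w,s,n)" by (cases b)
    have b': "w \<in> particles (shift L d \<eta>)" "s \<in> {1,-1}" "n \<in> {1..Imax L \<rho> (shift L d \<eta>) w s}"
      "particles (shift L d \<eta>') = moved L (shift L d \<eta>) w s n"
      using b unfolding bw Tset_def mem_Collect_eq prod.case by blast+
    obtain v where v: "v \<in> particles \<eta>" and wv: "w = addL L v d" using ps b'(1) by blast
    have vS: "v \<in> sitesL L" using v P(1) by blast
    have iv: "addL L w (- fst d, - snd d) = v" unfolding wv by (rule back1[OF vS])
    show "j (i b) = b" using iv wv by (simp add: i_def j_def bw)
    show "(real L)^2 / (2 * real (snd (snd (i b)))) = (real L)^2 / (2 * real (snd (snd b)))"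
      by (simp add: i_def)
    show "i b \<in> Tset L \<rho> \<eta> \<eta>'"
      using b' v unfolding i_def bw fst_conv snd_conv iv Tset_def mem_Collect_eq prod.case wv back1[OF vS] Imax_shift[OF L e v] cond[OF v]
      by blast
  qed
qed



lemma integral_Ico:
  fixes f :: "real \<Rightarrow> real"
  assumes "a \<le> b"
  shows "integral {a..<b} f = integral {a..b} f"
proof -
  have "(f has_integral y) {a..<b} \<longleftrightarrow> (f has_integral y) {a..b}" for y
  proof (rule has_integral_spike_set_eq)
    show "negligible {x \<in> {a..<b} - {a..b}. f x \<noteq> 0}" by (rule negligible_subset[of "{}"]) auto
    show "negligible {x \<in> {a..b} - {a..<b}. f x \<noteq> 0}" by (rule negligible_subset[of "{b}"]) auto
  qed
  moreover have "f integrable_on {a..<b} \<longleftrightarrow> f integrable_on {a..b}" using calculation by (simp add: integrable_on_def)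
  ultimately show ?thesis unfolding integral_def by simp
qed

lemma sq_tangent:
  fixes p q l :: real
  assumes "0 < l"
  shows "(1 - l) * p^2 + (1 - 1/l) * q^2 \<le> (p - q)^2"
proof -
  have "(p - q)^2 - ((1 - l) * p^2 + (1 - 1/l) * q^2) = (l * p - q)^2 / l"
    using assms by (simp add: field_simps power2_eq_square)
  moreover have "0 \<le> (l * p - q)^2 / l" using assms by simp
  ultimately show ?thesis by linarith
qed

lemma avg_sqrt:
  fixes f g :: "'u \<Rightarrow> real \<Rightarrow> real"
  assumes B: "finite B" "B \<noteq> {}" and ab: "a < b" and K: "0 < K" and c: "0 < c"
    and cf: "\<And>u. u \<in> B \<Longrightarrow> continuous_on {a..b} (f u)"
    and cg: "\<And>u. u \<in> B \<Longrightarrow> continuous_on {a..b} (g u)"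
    and pf: "\<And>u s. u \<in> B \<Longrightarrow> s \<in> {a..b} \<Longrightarrow> c \<le> f u s"
    and pg: "\<And>u s. u \<in> B \<Longrightarrow> s \<in> {a..b} \<Longrightarrow> c \<le> g u s"
  shows "(sqrt (K * (\<Sum>u\<in>B. integral {a..b} (f u))) - sqrt (K * (\<Sum>u\<in>B. integral {a..b} (g u))))^2
         \<le> K * (\<Sum>u\<in>B. integral {a..b} (\<lambda>s. (sqrt (f u s) - sqrt (g u s))^2))"
proof -
  define F where "F = K * (\<Sum>u\<in>B. integral {a..b} (f u))"
  define G where "G = K * (\<Sum>u\<in>B. integral {a..b} (g u))"
  have intf: "f u integrable_on {a..b}" if "u \<in> B" for u using cf[OF that] by (rule integrable_continuous_interval)
  have intg: "g u integrable_on {a..b}" if "u \<in> B" for u using cg[OF that] by (rule integrable_continuous_interval)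
  have lowf: "c * (b - a) \<le> integral {a..b} (f u)" if "u \<in> B" for u
  proof -
    have "integral {a..b} (\<lambda>s. c) \<le> integral {a..b} (f u)"
      by (rule integral_le) (use intf[OF that] pf[OF that] in auto)
    thus ?thesis using ab by (simp add: mult.commute)
  qed
  have lowg: "c * (b - a) \<le> integral {a..b} (g u)" if "u \<in> B" for u
  proof -
    have "integral {a..b} (\<lambda>s. c) \<le> integral {a..b} (g u)"
      by (rule integral_le) (use intg[OF that] pg[OF that] in auto)
    thus ?thesis using ab by (simp add: mult.commute)
  qed
  obtain u0 where u0: "u0 \<in> B" using B by blast
  have pos_sum: "0 < (\<Sum>u\<in>B. integral {a..b} (h u))" if "\<And>u. u \<in> B \<Longrightarrow> c * (b - a) \<le> integral {a..b} (h u)" for h :: "'u \<Rightarrow> real \<Rightarrow> real"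
  proof -
    have "0 < c * (b - a)" using c ab by simp
    also have "\<dots> \<le> integral {a..b} (h u0)" using that u0 by blast
    also have "\<dots> \<le> (\<Sum>u\<in>B. integral {a..b} (h u))"
    proof (rule member_le_sum[OF u0 _ B(1)])
      fix x assume "x \<in> B - {u0}"
      hence "c * (b - a) \<le> integral {a..b} (h x)" using that by blast
      moreover have "0 \<le> c * (b - a)" using c ab by simp
      ultimately show "0 \<le> integral {a..b} (h x)" by linarith
    qed
    finally show ?thesis .
  qed
  have Fp: "0 < F" unfolding F_def using K pos_sum[of f] lowf by simp
  have Gp: "0 < G" unfolding G_def using K pos_sum[of g] lowg by simp
  define l where "l = sqrt G / sqrt F"
  have lp: "0 < l" using Fp Gp by (simp add: l_def)
  have pt: "(1 - l) * f u s + (1 - 1/l) * g u s \<le> (sqrt (f u s) - sqrt (g u s))^2"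
    if "u \<in> B" "s \<in> {a..b}" for u s
  proof -
    have "0 \<le> f u s" "0 \<le> g u s" using pf[OF that] pg[OF that] c by linarith+
    thus ?thesis using sq_tangent[OF lp, of "sqrt (f u s)" "sqrt (g u s)"] by simp
  qed
  have intsq: "(\<lambda>s. (sqrt (f u s) - sqrt (g u s))^2) integrable_on {a..b}" if "u \<in> B" for u
    by (rule integrable_continuous_interval) (intro continuous_intros cf cg that)
  have "K * (\<Sum>u\<in>B. integral {a..b} (\<lambda>s. (1 - l) * f u s + (1 - 1/l) * g u s))
      \<le> K * (\<Sum>u\<in>B. integral {a..b} (\<lambda>s. (sqrt (f u s) - sqrt (g u s))^2))"
  proof -
    have "(\<lambda>s. (1 - l) * f u s + (1 - 1/l) * g u s) integrable_on {a..b}" if "u \<in> B" for u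
      by (rule integrable_continuous_interval) (intro continuous_intros cf cg that)
    note il = this
    have "integral {a..b} (\<lambda>s. (1 - l) * f u s + (1 - 1/l) * g u s) \<le> integral {a..b} (\<lambda>s. (sqrt (f u s) - sqrt (g u s))^2)"
      if u: "u \<in> B" for u
      by (rule integral_le[OF il[OF u] intsq[OF u]]) (rule pt[OF u])
    hence "(\<Sum>u\<in>B. integral {a..b} (\<lambda>s. (1 - l) * f u s + (1 - 1/l) * g u s)) \<le> (\<Sum>u\<in>B. integral {a..b} (\<lambda>s. (sqrt (f u s) - sqrt (g u s))^2))"
      by (rule sum_mono)
    thus ?thesis using K by (intro mult_left_mono) auto
  qed
  also have "K * (\<Sum>u\<in>B. integral {a..b} (\<lambda>s. (1 - l) * f u s + (1 - 1/l) * g u s))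
      = (1 - l) * F + (1 - 1/l) * G"
  proof -
    have "integral {a..b} (\<lambda>s. (1 - l) * f u s + (1 - 1/l) * g u s) =
          (1 - l) * integral {a..b} (f u) + (1 - 1/l) * integral {a..b} (g u)" if "u \<in> B" for u
    proof -
      have i1: "(\<lambda>s. (1 - l) * f u s) integrable_on {a..b}"
        by (rule integrable_continuous_interval) (intro continuous_intros cf that)
      have i2: "(\<lambda>s. (1 - 1/l) * g u s) integrable_on {a..b}"
        by (rule integrable_continuous_interval) (intro continuous_intros cg that)
      have e1: "integral {a..b} (\<lambda>s. (1 - l) * f u s) = (1 - l) * integral {a..b} (f u)"
        by (rule integral_mult[OF intf[OF that], symmetric])
      have e2: "integral {a..b} (\<lambda>s. (1 - 1/l) * g u s) = (1 - 1/l) * integral {a..b} (g u)"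
        by (rule integral_mult[OF intg[OF that], symmetric])
      show ?thesis using integral_add[OF i1 i2] e1 e2 by linarith
    qed
    hence "(\<Sum>u\<in>B. integral {a..b} (\<lambda>s. (1 - l) * f u s + (1 - 1/l) * g u s)) =
        (\<Sum>u\<in>B. (1 - l) * integral {a..b} (f u) + (1 - 1/l) * integral {a..b} (g u))"
      by (rule sum.cong[OF refl])
    also have "\<dots> = (1 - l) * (\<Sum>u\<in>B. integral {a..b} (f u)) + (1 - 1/l) * (\<Sum>u\<in>B. integral {a..b} (g u))"
      by (simp only: sum.distrib sum_distrib_left)
    finally have "K * (\<Sum>u\<in>B. integral {a..b} (\<lambda>s. (1 - l) * f u s + (1 - 1/l) * g u s)) =
        K * ((1 - l) * (\<Sum>u\<in>B. integral {a..b} (f u)) + (1 - 1/l) * (\<Sum>u\<in>B. integral {a..b} (g u)))"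
      by simp
    also have "\<dots> = (1 - l) * F + (1 - 1/l) * G"
      unfolding F_def G_def by (simp only: distrib_left mult.left_commute)
    finally show ?thesis .
  qed
  also have "(1 - l) * F + (1 - 1/l) * G = (sqrt F - sqrt G)^2"
  proof -
    have sF: "sqrt F * sqrt F = F" and sG: "sqrt G * sqrt G = G" using Fp Gp by simp_all
    have pF: "0 < sqrt F" and pG: "0 < sqrt G" using Fp Gp by simp_all
    have "l * F = sqrt G / sqrt F * (sqrt F * sqrt F)" unfolding l_def sF ..
    also have "\<dots> = sqrt F * sqrt G" using pF by (simp add: field_simps)
    finally have 1: "l * F = sqrt F * sqrt G" .
    have "G / l = (sqrt G * sqrt G) / (sqrt G / sqrt F)" unfolding l_def sG ..
    also have "\<dots> = sqrt F * sqrt G" using pF pG by (simp add: field_simps)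
    finally have 2: "G / l = sqrt F * sqrt G" .
    have "(1 - l) * F + (1 - 1/l) * G = F + G - l * F - G / l" by (simp add: algebra_simps)
    also have "\<dots> = sqrt F * sqrt F + sqrt G * sqrt G - 2 * (sqrt F * sqrt G)" using 1 2 sF sG by simp
    also have "\<dots> = (sqrt F - sqrt G)^2" by (simp add: power2_eq_square algebra_simps)
    finally show ?thesis .
  qed
  finally show ?thesis unfolding F_def G_def .
qed



lemma DF_avg:
  fixes F :: "'u \<Rightarrow> real \<Rightarrow> 'a \<Rightarrow> real"
  assumes S: "finite S" and B: "finite B" "B \<noteq> {}" and ab: "a < b" and K: "0 < K" and c: "0 < c"
    and Rnn: "\<And>x y. x \<in> S \<Longrightarrow> y \<in> S \<Longrightarrow> 0 \<le> R x y"
    and cont: "\<And>u x. u \<in> B \<Longrightarrow> x \<in> S \<Longrightarrow> continuous_on {a..b} (\<lambda>s. F u s x)"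
    and low: "\<And>u s x. u \<in> B \<Longrightarrow> s \<in> {a..b} \<Longrightarrow> x \<in> S \<Longrightarrow> c \<le> F u s x"
  shows "DF S R (\<lambda>x. K * (\<Sum>u\<in>B. integral {a..b} (\<lambda>s. F u s x)))
         \<le> K * (\<Sum>u\<in>B. integral {a..b} (\<lambda>s. DF S R (F u s)))"
proof -
  define h where "h u x y s = (sqrt (F u s x) - sqrt (F u s y))^2" for u x y s
  have ch: "continuous_on {a..b} (h u x y)" if "u \<in> B" "x \<in> S" "y \<in> S" for u x y
    unfolding h_def by (intro continuous_intros cont that)
  have "DF S R (\<lambda>x. K * (\<Sum>u\<in>B. integral {a..b} (\<lambda>s. F u s x)))
      \<le> (\<Sum>x\<in>S. \<Sum>y\<in>S - {x}. R x y * (K * (\<Sum>u\<in>B. integral {a..b} (h u x y))))"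
    unfolding DF_def
  proof (intro sum_mono mult_left_mono)
    fix x y assume xy: "x \<in> S" "y \<in> S - {x}"
    show "0 \<le> R x y" using xy Rnn by auto
    show "(sqrt (K * (\<Sum>u\<in>B. integral {a..b} (\<lambda>s. F u s x))) - sqrt (K * (\<Sum>u\<in>B. integral {a..b} (\<lambda>s. F u s y))))^2
        \<le> K * (\<Sum>u\<in>B. integral {a..b} (h u x y))"
      unfolding h_def
      by (rule avg_sqrt[OF B ab K c]) (use xy in \<open>auto intro: cont low\<close>)
  qed
  also have "\<dots> = K * (\<Sum>u\<in>B. \<Sum>x\<in>S. \<Sum>y\<in>S - {x}. integral {a..b} (\<lambda>s. R x y * h u x y s))"
  proof -
    have "(\<Sum>x\<in>S. \<Sum>y\<in>S - {x}. R x y * (K * (\<Sum>u\<in>B. integral {a..b} (h u x y))))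
        = K * (\<Sum>x\<in>S. \<Sum>y\<in>S - {x}. \<Sum>u\<in>B. R x y * integral {a..b} (h u x y))"
      by (simp add: sum_distrib_left mult.left_commute)
    also have "\<dots> = K * (\<Sum>u\<in>B. \<Sum>x\<in>S. \<Sum>y\<in>S - {x}. R x y * integral {a..b} (h u x y))"
      by (simp only: sum.swap[of _ "S - {_}"] sum.swap[of _ S])
    also have "\<dots> = K * (\<Sum>u\<in>B. \<Sum>x\<in>S. \<Sum>y\<in>S - {x}. integral {a..b} (\<lambda>s. R x y * h u x y s))"
    proof -
      have "R x y * integral {a..b} (h u x y) = integral {a..b} (\<lambda>s. R x y * h u x y s)"
        if "u \<in> B" "x \<in> S" "y \<in> S - {x}" for u x y
        by (rule integral_mult) (rule integrable_continuous_interval, rule ch, use that in auto)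
      thus ?thesis by (intro arg_cong[where f="\<lambda>z. K * z"] sum.cong refl) auto
    qed
    finally show ?thesis .
  qed
  also have "\<dots> = K * (\<Sum>u\<in>B. integral {a..b} (\<lambda>s. DF S R (F u s)))"
  proof -
    have "(\<Sum>x\<in>S. \<Sum>y\<in>S - {x}. integral {a..b} (\<lambda>s. R x y * h u x y s)) = integral {a..b} (\<lambda>s. DF S R (F u s))"
      if u: "u \<in> B" for u
    proof -
      have i1: "(\<lambda>s. R x y * h u x y s) integrable_on {a..b}" if "x \<in> S" "y \<in> S" for x y
        by (rule integrable_continuous_interval) (intro continuous_intros ch u that)
      have i2: "(\<lambda>s. \<Sum>y\<in>S - {x}. R x y * h u x y s) integrable_on {a..b}" if "x \<in> S" for x
        by (rule integrable_continuous_interval) (intro continuous_intros ch u that, auto)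
      have "integral {a..b} (\<lambda>s. DF S R (F u s)) = integral {a..b} (\<lambda>s. \<Sum>x\<in>S. \<Sum>y\<in>S - {x}. R x y * h u x y s)"
        unfolding DF_def h_def ..
      also have "\<dots> = (\<Sum>x\<in>S. integral {a..b} (\<lambda>s. \<Sum>y\<in>S - {x}. R x y * h u x y s))"
        by (rule integral_sum[OF S i2])
      also have "\<dots> = (\<Sum>x\<in>S. \<Sum>y\<in>S - {x}. integral {a..b} (\<lambda>s. R x y * h u x y s))"
      proof (rule sum.cong[OF refl])
        fix x assume x: "x \<in> S"
        show "integral {a..b} (\<lambda>s. \<Sum>y\<in>S - {x}. R x y * h u x y s) = (\<Sum>y\<in>S - {x}. integral {a..b} (\<lambda>s. R x y * h u x y s))"
          by (rule integral_sum) (use S i1 x in auto)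
      qed
      finally show ?thesis by simp
    qed
    thus ?thesis by simp
  qed
  finally show ?thesis .
qed

lemma DF_shift:
  assumes L: "0 < L"
  shows "DF (Omega L \<rho>) (rate L \<rho>) (\<lambda>x. r (shift L u x)) = DF (Omega L \<rho>) (rate L \<rho>) r"
proof -
  define \<Omega> where "\<Omega> = Omega L \<rho>"
  define \<sigma> where "\<sigma> = shift L u"
  have bij: "bij_betw \<sigma> \<Omega> \<Omega>" unfolding \<sigma>_def \<Omega>_def by (rule shift_bij[OF L])
  define G where "G x = (\<Sum>y\<in>\<Omega> - {x}. rate L \<rho> x y * (sqrt (r x) - sqrt (r y))^2)" for x
  have "DF \<Omega> (rate L \<rho>) (\<lambda>x. r (\<sigma> x)) = (\<Sum>x\<in>\<Omega>. G (\<sigma> x))"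
    unfolding DF_def
  proof (rule sum.cong[OF refl])
    fix x assume x: "x \<in> \<Omega>"
    have bij': "bij_betw \<sigma> (\<Omega> - {x}) (\<Omega> - {\<sigma> x})"
    proof (rule bij_betw_DiffI[OF bij])
      show "bij_betw \<sigma> {x} {\<sigma> x}" by (simp add: bij_betw_def)
      show "{x} \<subseteq> \<Omega>" using x by simp
      show "{\<sigma> x} \<subseteq> \<Omega>" using x bij_betw_apply[OF bij] by simp
    qed
    have "(\<Sum>y\<in>\<Omega> - {x}. rate L \<rho> x y * (sqrt (r (\<sigma> x)) - sqrt (r (\<sigma> y)))^2)
        = (\<Sum>y\<in>\<Omega> - {x}. rate L \<rho> (\<sigma> x) (\<sigma> y) * (sqrt (r (\<sigma> x)) - sqrt (r (\<sigma> y)))^2)"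
      using x by (intro sum.cong refl) (simp add: \<sigma>_def \<Omega>_def rate_shift[OF L])
    also have "\<dots> = G (\<sigma> x)"
      unfolding G_def by (rule sum.reindex_bij_betw[OF bij'])
    finally show "(\<Sum>y\<in>\<Omega> - {x}. rate L \<rho> x y * (sqrt (r (\<sigma> x)) - sqrt (r (\<sigma> y)))^2) = G (\<sigma> x)" .
  qed
  also have "\<dots> = (\<Sum>x\<in>\<Omega>. G x)" by (rule sum.reindex_bij_betw[OF bij])
  also have "\<dots> = DF \<Omega> (rate L \<rho>) r" unfolding DF_def G_def ..
  finally show ?thesis by (simp add: \<Omega>_def \<sigma>_def)
qed

lemma expect_delta:
  assumes L: "0 < L" and z: "\<zeta> \<in> Omega L \<rho>"
  shows "expect L \<rho> \<eta>0 s (\<lambda>\<eta>. if shift L (- u) \<eta> = \<zeta> then 1 else 0) = transprob L \<rho> s \<eta>0 (shift L u \<zeta>)"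
proof -
  have iff: "(shift L (- u) \<eta> = \<zeta>) = (\<eta> = shift L u \<zeta>)" if e: "\<eta> \<in> Omega L \<rho>" for \<eta>
  proof
    assume "shift L (- u) \<eta> = \<zeta>"
    hence "shift L u (shift L (- u) \<eta>) = shift L u \<zeta>" by simp
    moreover have "shift L u (shift L (- u) \<eta>) = \<eta>" by (rule shift_shift[OF Omega_sub[OF e]]) simp_all
    ultimately show "\<eta> = shift L u \<zeta>" by simp
  next
    assume "\<eta> = shift L u \<zeta>"
    thus "shift L (- u) \<eta> = \<zeta>" by (simp add: shift_shift[OF Omega_sub[OF z]])
  qed
  have "expect L \<rho> \<eta>0 s (\<lambda>\<eta>. if shift L (- u) \<eta> = \<zeta> then 1 else 0)
      = (\<Sum>\<eta>\<in>Omega L \<rho>. if \<eta> = shift L u \<zeta> then transprob L \<rho> s \<eta>0 \<eta> else 0)"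
    unfolding expect_def by (intro sum.cong refl) (simp add: iff)
  also have "\<dots> = transprob L \<rho> s \<eta>0 (shift L u \<zeta>)"
    using shift_Omega[OF L z] finite_Omega by simp
  finally show ?thesis .
qed

lemma card_Bbox:
  assumes "1 \<le> fst j" "1 \<le> snd j"
  shows "card (Bbox L N j) = (L div N) * (L div N)"
proof -
  define M where "M = int (L div N)"
  have "Bbox L N j = {int (fst j - 1) * M ..< int (fst j) * M} \<times> {int (snd j - 1) * M ..< int (snd j) * M}"
    unfolding Bbox_def M_def by (rule set_eqI) (simp add: split_def mem_Times_iff)
  moreover have "int (fst j) * M - int (fst j - 1) * M = M" "int (snd j) * M - int (snd j - 1) * M = M"
    using assms by (simp_all add: of_nat_diff algebra_simps)
  ultimately show ?thesis by (simp add: card_cartesian_product M_def)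
qed

lemma relent_HH:
  assumes fin: "finite (Omega L \<rho>)" and pos: "\<And>x. x \<in> Omega L \<rho> \<Longrightarrow> 0 < r x"
    and sum1: "(\<Sum>x\<in>Omega L \<rho>. r x) = 1" and ne: "Omega L \<rho> \<noteq> {}"
  shows "rel_entropy L \<rho> r = HH (Omega L \<rho>) r + ln (real (card (Omega L \<rho>)))"
proof -
  have cpos: "0 < real (card (Omega L \<rho>))" using fin ne by (simp add: card_gt_0_iff)
  have "rel_entropy L \<rho> r = (\<Sum>x\<in>Omega L \<rho>. r x * ln (r x) + r x * ln (real (card (Omega L \<rho>))))"
    unfolding rel_entropy_def
  proof (intro sum.cong refl)
    fix x assume x: "x \<in> Omega L \<rho>"
    have "r x / (1 / real (card (Omega L \<rho>))) = r x * real (card (Omega L \<rho>))" by simp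
    thus "(if r x = 0 then 0 else r x * ln (r x / (1 / real (card (Omega L \<rho>))))) =
          r x * ln (r x) + r x * ln (real (card (Omega L \<rho>)))"
      using pos[OF x] cpos by (simp add: ln_mult distrib_left)
  qed
  also have "\<dots> = HH (Omega L \<rho>) r + ln (real (card (Omega L \<rho>)))"
    by (simp add: sum.distrib HH_def sum_distrib_right[symmetric] sum1)
  finally show ?thesis .
qed

lemma relent_nonneg:
  assumes fin: "finite (Omega L \<rho>)" and pos: "\<And>x. x \<in> Omega L \<rho> \<Longrightarrow> 0 < r x"
    and sum1: "(\<Sum>x\<in>Omega L \<rho>. r x) = 1" and ne: "Omega L \<rho> \<noteq> {}"
  shows "0 \<le> rel_entropy L \<rho> r"
proof -
  define n where "n = real (card (Omega L \<rho>))"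
  have npos: "0 < n" using fin ne by (simp add: card_gt_0_iff n_def)
  have t: "r x - 1 / n \<le> (if r x = 0 then 0 else r x * ln (r x / (1 / n)))" if x: "x \<in> Omega L \<rho>" for x
  proof -
    have rx: "0 < r x" by (rule pos[OF x])
    have "ln (1 / (r x * n)) \<le> 1 / (r x * n) - 1" using rx npos by (intro ln_le_minus_one) simp
    hence "1 - 1 / (r x * n) \<le> ln (r x * n)" using rx npos by (simp add: ln_div)
    hence "r x * (1 - 1 / (r x * n)) \<le> r x * ln (r x * n)" using rx by (intro mult_left_mono) auto
    moreover have "r x * (1 - 1 / (r x * n)) = r x - 1 / n" using rx npos by (simp add: field_simps)
    ultimately show ?thesis using rx by simp
  qed
  have "(\<Sum>x\<in>Omega L \<rho>. r x - 1 / n) \<le> rel_entropy L \<rho> r"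
    unfolding rel_entropy_def n_def[symmetric] by (rule sum_mono) (rule t)
  moreover have "(\<Sum>x\<in>Omega L \<rho>. r x - 1 / n) = 0"
    using npos by (simp add: sum_subtractf sum1 n_def)
  ultimately show ?thesis by simp
qed

lemma gen_eq: "generator L \<rho> = gen (Omega L \<rho>) (rate L \<rho>)"
  by (intro ext) (simp add: generator_def gen_def)

lemma transprob_PP: "transprob L \<rho> s a b = PP (Omega L \<rho>) (generator L \<rho>) s a b"
  by (simp add: transprob_def PP_def)

lemma dirichlet_DF: "dirichlet L \<rho> r = DF (Omega L \<rho>) (rate L \<rho>) r / (2 * (real L)^2)"
  by (simp add: dirichlet_def DF_def)

lemma rate_nonneg: "0 \<le> rate L \<rho> x y"
  unfolding rate_def by (intro sum_nonneg) auto



lemma DF_cong: "(\<And>x. x \<in> S \<Longrightarrow> f x = g x) \<Longrightarrow> DF S R f = DF S R g"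
  unfolding DF_def by (intro sum.cong refl) auto

lemma eps_bound:
  fixes \<rho> :: "real \<times> real" and \<eta>0 :: config and C t \<epsilon> :: real and N i L :: nat and j :: "nat \<times> nat"
  assumes L: "0 < L" and e0: "\<eta>0 \<in> Omega L \<rho>"
    and Cb: "\<forall>r. prob_on (Omega L \<rho>) r \<longrightarrow> rel_entropy L \<rho> r \<le> C * (real L)^2"
    and t: "0 < t" and N: "1 \<le> N" and i: "1 \<le> i" and j: "1 \<le> fst j" "1 \<le> snd j" and dvd: "N dvd L"
    and eps: "0 < \<epsilon>" "\<epsilon> < 1"
  shows "dirichlet L \<rho> (\<lambda>\<zeta>. (1 - \<epsilon>) * pmeas L \<rho> \<eta>0 t N i j \<zeta> + \<epsilon> / real (card (Omega L \<rho>)))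
           \<le> C * real N / (2 * t)"
proof -
  define \<Omega> where "\<Omega> = Omega L \<rho>"
  define R where "R = rate L \<rho>"
  define Q where "Q = generator L \<rho>"
  have fin: "finite \<Omega>" unfolding \<Omega>_def by (rule finite_Omega)
  have ne: "\<Omega> \<noteq> {}" using e0 by (auto simp: \<Omega>_def)
  define n where "n = real (card \<Omega>)"
  have npos: "0 < n" using fin ne by (simp add: n_def card_gt_0_iff)
  have Rnn: "\<And>x y. 0 \<le> R x y" unfolding R_def by (rule rate_nonneg)
  have Rsym: "\<And>x y. x \<in> \<Omega> \<Longrightarrow> y \<in> \<Omega> \<Longrightarrow> R x y = R y x"
    unfolding R_def \<Omega>_def by (rule rate_sym[OF L])
  have Qg: "Q = gen \<Omega> R" unfolding Q_def \<Omega>_def R_def by (rule gen_eq)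
  have rows: "\<And>c. c \<in> \<Omega> \<Longrightarrow> (\<Sum>b\<in>\<Omega>. Q c b) = 0" unfolding Qg by (rule gen_rowsum[OF fin])
  have Qsym: "Q c b = Q b c" if "c \<in> \<Omega>" "b \<in> \<Omega>" for c b
    unfolding Qg gen_def using Rsym[OF that] by auto
  have cols: "(\<Sum>c\<in>\<Omega>. Q c b) = 0" if "b \<in> \<Omega>" for b
    using rows[OF that] Qsym that by (metis (no_types, lifting) sum.cong)
  define \<mu> where "\<mu> s x = PP \<Omega> Q s \<eta>0 x" for s x
  have tp: "transprob L \<rho> s \<eta>0 x = \<mu> s x" for s x by (simp add: \<mu>_def transprob_PP \<Omega>_def Q_def)
  define lam where "lam = (\<Sum>c\<in>\<Omega>. \<Sum>z\<in>\<Omega> - {c}. R c z)"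
  have mu_nn: "0 \<le> \<mu> s x" if "0 \<le> s" "x \<in> \<Omega>" for s x
    unfolding \<mu>_def
  proof (rule PP_nonneg[OF fin _ that(2) that(1), where lam=lam])
    show "\<eta>0 \<in> \<Omega>" using e0 by (simp add: \<Omega>_def)
    show "0 \<le> Q c d" if "c \<in> \<Omega>" "d \<in> \<Omega>" "c \<noteq> d" for c d using that Rnn by (simp add: Qg gen_def)
    show "0 \<le> Q c c + lam" if c: "c \<in> \<Omega>" for c
    proof -
      have "(\<Sum>z\<in>\<Omega> - {c}. R c z) \<le> lam" unfolding lam_def
        by (rule member_le_sum[OF c _ fin]) (intro sum_nonneg, simp add: Rnn)
      thus ?thesis by (simp add: Qg gen_def)
    qed
  qed
  have mu_sum: "(\<Sum>x\<in>\<Omega>. \<mu> s x) = 1" for s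
    unfolding \<mu>_def by (rule PP_rowsum[OF fin _ rows]) (use e0 in \<open>simp add: \<Omega>_def\<close>)
  have mu_der: "((\<lambda>s. \<mu> s x) has_real_derivative (\<Sum>c\<in>\<Omega>. \<mu> s c * Q c x)) (at s)" if "x \<in> \<Omega>" for s x
    using PP_deriv[OF fin that, of Q \<eta>0 s] by (simp add: \<mu>_def)
  have mu_cont: "continuous_on A (\<lambda>s. \<mu> s x)" if "x \<in> \<Omega>" for A x
    by (rule has_real_derivative_imp_continuous_on) (rule mu_der[OF that])
  define r where "r s x = (1 - \<epsilon>) * \<mu> s x + \<epsilon> / n" for s x
  have r_low: "\<epsilon> / n \<le> r s x" if "0 \<le> s" "x \<in> \<Omega>" for s x
    using mu_nn[OF that] eps by (simp add: r_def)
  have epsn: "0 < \<epsilon> / n" using eps npos by simp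
  have r_pos: "0 < r s x" if "0 \<le> s" "x \<in> \<Omega>" for s x using r_low[OF that] epsn by linarith
  have r_sum: "(\<Sum>x\<in>\<Omega>. r s x) = 1" for s
    using mu_sum[of s] npos by (simp add: r_def sum.distrib sum_distrib_left[symmetric] n_def)
  have r_der: "((\<lambda>s. r s x) has_real_derivative (\<Sum>c\<in>\<Omega>. r s c * gen \<Omega> R c x)) (at s)" if x: "x \<in> \<Omega>" for s x
  proof -
    have "((\<lambda>s. r s x) has_real_derivative (1 - \<epsilon>) * (\<Sum>c\<in>\<Omega>. \<mu> s c * Q c x)) (at s)"
      unfolding r_def using DERIV_add[OF DERIV_cmult[OF mu_der[OF x, of s], of "1 - \<epsilon>"] DERIV_const[of "\<epsilon> / n" "at s"]]
      by simp
    moreover have "(\<Sum>c\<in>\<Omega>. r s c * gen \<Omega> R c x) = (1 - \<epsilon>) * (\<Sum>c\<in>\<Omega>. \<mu> s c * Q c x)"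
    proof -
      have "(\<Sum>c\<in>\<Omega>. r s c * Q c x) = (1 - \<epsilon>) * (\<Sum>c\<in>\<Omega>. \<mu> s c * Q c x) + \<epsilon> / n * (\<Sum>c\<in>\<Omega>. Q c x)"
        by (simp add: r_def distrib_right sum.distrib sum_distrib_left mult.assoc)
      thus ?thesis using cols[OF x] by (simp add: Qg)
    qed
    ultimately show ?thesis by simp
  qed
  have r_cont: "continuous_on A (\<lambda>s. r s x)" if "x \<in> \<Omega>" for A x
    by (rule has_real_derivative_imp_continuous_on) (rule r_der[OF that])
  define a0 where "a0 = t * (real i - 1) / real N"
  define b0 where "b0 = t * real i / real N"
  have a0: "0 \<le> a0" using t i N by (simp add: a0_def)
  have ab: "a0 < b0" using t N by (simp add: a0_def b0_def divide_strict_right_mono)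
  have ba: "b0 - a0 = t / real N" by (simp add: a0_def b0_def diff_divide_distrib[symmetric] algebra_simps)
  have diss: "integral {a0..b0} (\<lambda>s. DF \<Omega> R (r s)) \<le> HH \<Omega> (r a0) - HH \<Omega> (r b0)"
    by (rule dissip_integral(2)[OF fin _ Rsym, where r=r]) (use Rnn ab a0 r_pos r_der in auto)
  have diss_int: "(\<lambda>s. DF \<Omega> R (r s)) integrable_on {a0..b0}"
    by (rule dissip_integral(1)[OF fin _ Rsym, where r=r]) (use Rnn ab a0 r_pos r_der in auto)
  have relent: "rel_entropy L \<rho> (r s) = HH \<Omega> (r s) + ln n" if "0 \<le> s" for s
    unfolding \<Omega>_def n_def by (rule relent_HH) (use finite_Omega r_pos that r_sum ne in \<open>auto simp: \<Omega>_def\<close>)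
  have ent_a: "rel_entropy L \<rho> (r a0) \<le> C * (real L)^2"
  proof -
    have "prob_on (Omega L \<rho>) (r a0)" unfolding prob_on_def using r_pos[OF a0] r_sum by (auto simp: \<Omega>_def less_imp_le)
    thus ?thesis using Cb by blast
  qed
  have ent_b: "0 \<le> rel_entropy L \<rho> (r b0)"
    by (rule relent_nonneg) (use finite_Omega r_pos a0 ab r_sum ne in \<open>auto simp: \<Omega>_def\<close>)
  have intDF: "integral {a0..b0} (\<lambda>s. DF \<Omega> R (r s)) \<le> C * (real L)^2"
    using diss ent_a ent_b relent[OF a0] relent[of b0] a0 ab by simp
  define B where "B = Bbox L N j"
  define M where "M = L div N"
  have LM: "real L = real N * real M" using dvd by (auto simp: M_def)
  have Mpos: "0 < M" using L N dvd by (auto simp: M_def elim!: dvdE)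
  have cB: "card B = M * M" unfolding B_def M_def by (rule card_Bbox[OF j])
  have finB: "finite B" and neB: "B \<noteq> {}" using cB Mpos by (auto intro: card_ge_0_finite simp: card_gt_0_iff[symmetric])
  define K where "K = 1 / (real L / real N)^2 * (1 / (t / real N))"
  have Kpos: "0 < K" using L N t by (simp add: K_def)
  have KB: "K * real (card B) * (b0 - a0) = 1"
    unfolding ba cB K_def using LM N t Mpos by (simp add: field_simps power2_eq_square)
  have KBt: "K * real (card B) = real N / t"
    using KB ba N t by (simp add: field_simps)
  define p where "p = pmeas L \<rho> \<eta>0 t N i j"
  have p_eq: "p \<zeta> = K * (\<Sum>u\<in>B. integral {a0..b0} (\<lambda>s. \<mu> s (shift L u \<zeta>)))" if z: "\<zeta> \<in> \<Omega>" for \<zeta>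
  proof -
    have "p \<zeta> = 1 / (real L / real N)^2 * (\<Sum>u\<in>B. 1 / (t / real N) * integral {a0..b0} (\<lambda>s. \<mu> s (shift L u \<zeta>)))"
      unfolding p_def pmeas_def pLt_def B_def a0_def[symmetric] b0_def[symmetric]
      using z ab by (simp add: expect_delta[OF L] \<Omega>_def tp integral_Ico)
    thus ?thesis by (simp add: K_def sum_distrib_left mult.assoc)
  qed
  define pe where "pe \<zeta> = (1 - \<epsilon>) * p \<zeta> + \<epsilon> / n" for \<zeta>
  have pe_eq: "pe \<zeta> = K * (\<Sum>u\<in>B. integral {a0..b0} (\<lambda>s. r s (shift L u \<zeta>)))" if z: "\<zeta> \<in> \<Omega>" for \<zeta>
  proof -
    have su: "shift L u \<zeta> \<in> \<Omega>" for u using shift_Omega[OF L] z by (simp add: \<Omega>_def)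
    have imu: "(\<lambda>s. \<mu> s (shift L u \<zeta>)) integrable_on {a0..b0}" for u
      by (rule integrable_continuous_interval, rule mu_cont[OF su])
    have "integral {a0..b0} (\<lambda>s. r s (shift L u \<zeta>)) = (1 - \<epsilon>) * integral {a0..b0} (\<lambda>s. \<mu> s (shift L u \<zeta>)) + \<epsilon> / n * (b0 - a0)" for u
    proof -
      have i1: "(\<lambda>s. (1 - \<epsilon>) * \<mu> s (shift L u \<zeta>)) integrable_on {a0..b0}"
        by (rule integrable_continuous_interval, intro continuous_intros mu_cont su)
      have "integral {a0..b0} (\<lambda>s. r s (shift L u \<zeta>)) = integral {a0..b0} (\<lambda>s. (1 - \<epsilon>) * \<mu> s (shift L u \<zeta>)) + integral {a0..b0} (\<lambda>s. \<epsilon> / n)"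
        unfolding r_def by (rule integral_add[OF i1]) (rule integrable_const_ivl)
      also have "integral {a0..b0} (\<lambda>s. (1 - \<epsilon>) * \<mu> s (shift L u \<zeta>)) = (1 - \<epsilon>) * integral {a0..b0} (\<lambda>s. \<mu> s (shift L u \<zeta>))"
        by (rule integral_mult[OF imu, symmetric])
      also have "integral {a0..b0} (\<lambda>s. \<epsilon> / n) = \<epsilon> / n * (b0 - a0)" using ab by simp
      finally show ?thesis .
    qed
    hence "(\<Sum>u\<in>B. integral {a0..b0} (\<lambda>s. r s (shift L u \<zeta>))) =
        (\<Sum>u\<in>B. (1 - \<epsilon>) * integral {a0..b0} (\<lambda>s. \<mu> s (shift L u \<zeta>)) + \<epsilon> / n * (b0 - a0))"
      by (rule sum.cong[OF refl])
    also have "\<dots> = (1 - \<epsilon>) * (\<Sum>u\<in>B. integral {a0..b0} (\<lambda>s. \<mu> s (shift L u \<zeta>))) + real (card B) * (\<epsilon> / n * (b0 - a0))"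
      by (simp add: sum.distrib sum_distrib_left)
    finally have eqX: "(\<Sum>u\<in>B. integral {a0..b0} (\<lambda>s. r s (shift L u \<zeta>))) = (1 - \<epsilon>) * (\<Sum>u\<in>B. integral {a0..b0} (\<lambda>s. \<mu> s (shift L u \<zeta>))) + real (card B) * (\<epsilon> / n * (b0 - a0))" .
    have "K * (\<Sum>u\<in>B. integral {a0..b0} (\<lambda>s. r s (shift L u \<zeta>))) =
        (1 - \<epsilon>) * (K * (\<Sum>u\<in>B. integral {a0..b0} (\<lambda>s. \<mu> s (shift L u \<zeta>)))) + \<epsilon> / n * (K * real (card B) * (b0 - a0))"
      unfolding eqX by (simp only: distrib_left mult.assoc mult.left_commute)
    thus ?thesis unfolding KB p_eq[OF z, symmetric] pe_def by simp
  qed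
  have "DF \<Omega> R pe = DF \<Omega> R (\<lambda>\<zeta>. K * (\<Sum>u\<in>B. integral {a0..b0} (\<lambda>s. r s (shift L u \<zeta>))))"
    by (rule DF_cong) (rule pe_eq)
  also have "\<dots> \<le> K * (\<Sum>u\<in>B. integral {a0..b0} (\<lambda>s. DF \<Omega> R (\<lambda>\<zeta>. r s (shift L u \<zeta>))))"
  proof (rule DF_avg[OF fin finB neB ab Kpos epsn])
    show "\<And>x y. 0 \<le> R x y" by (rule Rnn)
    fix u x assume "u \<in> B" "x \<in> \<Omega>"
    hence su: "shift L u x \<in> \<Omega>" using shift_Omega[OF L] by (simp add: \<Omega>_def)
    show "continuous_on {a0..b0} (\<lambda>s. r s (shift L u x))" by (rule r_cont[OF su])
    fix s assume "s \<in> {a0..b0}"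
    thus "\<epsilon> / n \<le> r s (shift L u x)" using r_low[OF _ su] a0 by auto
  qed
  also have "\<dots> = K * (\<Sum>u\<in>B. integral {a0..b0} (\<lambda>s. DF \<Omega> R (r s)))"
    unfolding \<Omega>_def R_def using DF_shift[OF L] by simp
  also have "\<dots> = K * real (card B) * integral {a0..b0} (\<lambda>s. DF \<Omega> R (r s))" by simp
  also have "\<dots> \<le> K * real (card B) * (C * (real L)^2)"
    using intDF Kpos by (intro mult_left_mono) auto
  finally have "DF \<Omega> R pe \<le> real N / t * (C * (real L)^2)" unfolding KBt .
  hence "DF \<Omega> R pe / (2 * (real L)^2) \<le> real N / t * (C * (real L)^2) / (2 * (real L)^2)"
    using L by (intro divide_right_mono) auto
  also have "\<dots> = C * real N / (2 * t)" using L t by (simp add: field_simps power2_eq_square)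
  finally show ?thesis
    unfolding dirichlet_DF \<Omega>_def[symmetric] R_def[symmetric] pe_def p_def n_def .
qed



lemma main_bound:
  fixes \<rho> :: "real \<times> real" and \<eta>0 :: config and C t :: real and N i L :: nat and j :: "nat \<times> nat"
  assumes L: "0 < L" and e0: "\<eta>0 \<in> Omega L \<rho>"
    and Cb: "\<forall>r. prob_on (Omega L \<rho>) r \<longrightarrow> rel_entropy L \<rho> r \<le> C * (real L)^2"
    and t: "0 < t" and N: "1 \<le> N" and i: "1 \<le> i" and j: "1 \<le> fst j" "1 \<le> snd j" and dvd: "N dvd L"
  shows "dirichlet L \<rho> (pmeas L \<rho> \<eta>0 t N i j) \<le> C * real N / t"
proof -
  define p where "p = pmeas L \<rho> \<eta>0 t N i j"
  define n where "n = real (card (Omega L \<rho>))"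
  have lim: "((\<lambda>\<epsilon>. dirichlet L \<rho> (\<lambda>\<zeta>. (1 - \<epsilon>) * p \<zeta> + \<epsilon> / n)) \<longlongrightarrow>
              dirichlet L \<rho> (\<lambda>\<zeta>. (1 - 0) * p \<zeta> + 0 / n)) (at_right 0)"
  proof -
    have "n \<noteq> 0" using e0 finite_Omega[of L \<rho>] by (auto simp: n_def card_eq_0_iff)
    thus ?thesis unfolding dirichlet_def by (intro tendsto_intros) auto
  qed
  have p0: "(\<lambda>\<zeta>. (1 - 0) * p \<zeta> + 0 / n) = p" by simp
  have ev: "eventually (\<lambda>\<epsilon>. dirichlet L \<rho> (\<lambda>\<zeta>. (1 - \<epsilon>) * p \<zeta> + \<epsilon> / n) \<le> C * real N / (2 * t)) (at_right 0)"
  proof -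
    have "eventually (\<lambda>\<epsilon>::real. \<epsilon> \<in> {0<..<1}) (at_right 0)" by (rule eventually_at_right_real) simp
    thus ?thesis
    proof (rule eventually_mono)
      fix \<epsilon> :: real assume "\<epsilon> \<in> {0<..<1}"
      thus "dirichlet L \<rho> (\<lambda>\<zeta>. (1 - \<epsilon>) * p \<zeta> + \<epsilon> / n) \<le> C * real N / (2 * t)"
        unfolding p_def n_def by (intro eps_bound[OF L e0 Cb t N i j dvd]) auto
    qed
  qed
  have le: "dirichlet L \<rho> p \<le> C * real N / (2 * t)"
    using tendsto_upperbound[OF lim ev] p0 by simp
  have nn: "0 \<le> dirichlet L \<rho> p"
    unfolding dirichlet_def by (intro mult_nonneg_nonneg sum_nonneg rate_nonneg) auto
  have "0 \<le> C * real N / (2 * t)" using le nn by linarith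
  hence "0 \<le> C" using t N by (simp add: zero_le_divide_iff zero_le_mult_iff)
  hence "C * real N / (2 * t) \<le> C * real N / t" using t N by (simp add: field_simps)
  thus ?thesis using le by (simp add: p_def)
qed


theorem lemma4:
  fixes L0 :: nat and rho :: "nat \<Rightarrow> real \<times> real" and rhobar :: "real \<times> real"
    and eta0 :: "nat \<Rightarrow> config" and A :: "(real \<times> real) set"
    and psi0 :: "real \<times> real \<Rightarrow> real" and C :: real
  assumes L0: "0 < L0"
    and rhoL: "\<forall>L\<ge>L0. rho L \<in> Tri \<and> real L * fst (rho L) \<in> \<nat> \<and> real L * snd (rho L) \<in> \<nat>"
    and rho_lim: "rho \<longlonglongrightarrow> rhobar" and rhobar: "rhobar \<in> Tri"
    and A: "compact A" "convex A" "A \<subseteq> Tri"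
    and psi_per: "\<forall>x. \<forall>a b::int. psi0 (x + (real_of_int a, real_of_int b)) = psi0 x"
    and psi_0: "psi0 (0,0) = 0"
    and psi_C2: "\<exists>g g'. (\<forall>x. (psi0 has_derivative (\<lambda>h. g x \<bullet> h)) (at x)) \<and>
                       (\<forall>x. (g has_derivative g' x) (at x)) \<and>
                       (\<forall>v. continuous_on UNIV (\<lambda>x. g' x v)) \<and>
                       (\<forall>x. g x + rhobar \<in> A)"
    and eta0: "\<forall>L\<ge>L0. eta0 L \<in> Omega L (rho L)"
    and height: "\<exists>H :: nat \<Rightarrow> site \<Rightarrow> real.
                   (\<forall>L\<ge>L0. is_height L (rho L) (eta0 L) (H L)) \<and>
                   (\<forall>x. (\<lambda>L. H L (\<lfloor>fst x * real L\<rfloor>, \<lfloor>snd x * real L\<rfloor>) / real L)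
                          \<longlonglongrightarrow> psi0 x)"
    and C: "\<forall>L\<ge>L0. \<forall>r. prob_on (Omega L (rho L)) r \<longrightarrow>
                rel_entropy L (rho L) r \<le> C * (real L)^2"
  shows "\<forall>t>0. \<forall>N\<ge>1. \<forall>i\<in>{1..N}. \<forall>j\<in>{1..N} \<times> {1..N}. \<forall>L\<ge>L0. N dvd L \<longrightarrow>
           dirichlet L (rho L) (pmeas L (rho L) (eta0 L) t N i j) \<le> C * real N / t"
  proof (intro allI impI ballI)
  fix t :: real and N :: nat and i :: nat and j :: "nat \<times> nat" and L :: nat
  assume t: "0 < t" and N: "1 \<le> N" and i: "i \<in> {1..N}" and j: "j \<in> {1..N} \<times> {1..N}" and LL: "L0 \<le> L" and dvd: "N dvd L"
  have Lp: "0 < L" using L0 LL by simp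
  show "dirichlet L (rho L) (pmeas L (rho L) (eta0 L) t N i j) \<le> C * real N / t"
  proof (rule main_bound[OF Lp])
    show "eta0 L \<in> Omega L (rho L)" using eta0 LL by blast
    show "\<forall>r. prob_on (Omega L (rho L)) r \<longrightarrow> rel_entropy L (rho L) r \<le> C * (real L)^2" using C LL by blast
    show "0 < t" by (rule t)
    show "1 \<le> N" by (rule N)
    show "1 \<le> i" using i by simp
    show "1 \<le> fst j" "1 \<le> snd j" using j by auto
    show "N dvd L" by (rule dvd)
  qed
qed

end
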